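(* Let $\theta\in\mathbb{R}^n$, $\sigma^2>0$, $g:\mathbb{R}^n\to\mathbb{R}^n$ measurable, and assume $\mathbb{E}[\|g(Y_\beta)\|_2^2\|Y_\beta-\theta\|_2^{2m}]<\infty$ for $m=0,1$ and some $\beta>0$. Then for all $\alpha\in[0,\beta)$, $$\mathrm{Risk}_\alpha(g)-\mathrm{Risk}(g)=\int_0^\alpha\frac{\sqrt n}{\sqrt2(1+t)}\sqrt{\mathrm{Var}(\|\theta-g(Y_t)\|_2^2)}\;\mathrm{Cor}\big(\|\theta-g(Y_t)\|_2^2,\|Y_t-\theta\|_2^2\big)\,dt$$ (where the product of the standard deviation and the correlation is interpreted as $0$ when the variance vanishes). If moreover $t\mapsto\mathrm{Var}(\|\theta-g(Y_t)\|_2^2)$ is nondecreasing on $[0,\alpha]$, then $$|\mathrm{Risk}_\alpha(g)-\mathrm{Risk}(g)|\le\frac{\sqrt n\,\alpha}{\sqrt2}\sqrt{\mathrm{Var}(\|\theta-g(Y_\alpha)\|_2^2)}.$$ If in addition $\mathbb{E}[\|g(Y_\beta)\|_2^4\|Y_\beta-\theta\|_2^{2m}]<\infty$ for $m=0,1$, then for all $\alpha\in[0,\beta)$, $$|\mathrm{Risk}_\alpha(g)-\mathrm{Risk}(g)|\le\frac{\sqrt n\,\alpha}{\sqrt2}\sqrt{\mathrm{Var}(\|\theta-g(Y)\|_2^2)}+O(\alpha^{3/2}),$$ where $O(\alpha^{3/2})$ denotes a quantity bounded by $C\alpha^{3/2}$ for some constant $C>0$ and all sufficiently small $\alpha$.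
   Context: For $\alpha\ge0$, $Y_\alpha\sim N(\theta,(1+\alpha)\sigma^2 I_n)$, $Y=Y_0\sim N(\theta,\sigma^2I_n)$, $\mathrm{Risk}_\alpha(g)=\mathbb{E}\|\theta-g(Y_\alpha)\|_2^2$ and $\mathrm{Risk}(g)=\mathrm{Risk}_0(g)$. $\mathrm{Cor}$ denotes Pearson correlation. (By unbiasedness of the CB estimator for $\mathrm{Risk}_\alpha(g)$, this difference is the bias of the CB estimator as an estimator of $\mathrm{Risk}(g)$.) *)

theory Defs
  imports "HOL-Probability.Probability"
begin

(* Law of Y ~ N(theta, v I_n) on R^n (here real^'n, n = CARD('n)):
   density w.r.t. Lebesgue measure = product of 1-d normal densities
   with mean theta$i and standard deviation sqrt v. *)
definition gauss :: "real^'n::finite \<Rightarrow> real \<Rightarrow> (real^'n) measure" where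
  "gauss \<theta> v = density lborel
     (\<lambda>x. ennreal (\<Prod>i\<in>UNIV. normal_density (\<theta>$i) (sqrt v) (x$i)))"

definition risk :: "real^'n::finite \<Rightarrow> real \<Rightarrow> (real^'n \<Rightarrow> real^'n) \<Rightarrow> real \<Rightarrow> real" where
  "risk \<theta> \<sigma>2 g \<alpha> = (\<integral>y. (norm (\<theta> - g y))\<^sup>2 \<partial>(gauss \<theta> ((1 + \<alpha>) * \<sigma>2)))"

(* Variance, valued in [0, infinity] so that an infinite variance is represented faithfully *)
definition var_ext :: "'a measure \<Rightarrow> ('a \<Rightarrow> real) \<Rightarrow> ennreal" where
  "var_ext M X = (\<integral>\<^sup>+ x. ennreal ((X x - (\<integral>y. X y \<partial>M))\<^sup>2) \<partial>M)"

definition var_real :: "'a measure \<Rightarrow> ('a \<Rightarrow> real) \<Rightarrow> real" where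
  "var_real M X = enn2real (var_ext M X)"

definition covar :: "'a measure \<Rightarrow> ('a \<Rightarrow> real) \<Rightarrow> ('a \<Rightarrow> real) \<Rightarrow> real" where
  "covar M X W = (\<integral>x. (X x - (\<integral>y. X y \<partial>M)) * (W x - (\<integral>y. W y \<partial>M)) \<partial>M)"

(* Pearson correlation (with the Isabelle convention z / 0 = 0) *)
definition pearson_cor :: "'a measure \<Rightarrow> ('a \<Rightarrow> real) \<Rightarrow> ('a \<Rightarrow> real) \<Rightarrow> real" where
  "pearson_cor M X W = covar M X W / (sqrt (var_real M X) * sqrt (var_real M W))"

(* sqrt(Var X) * Cor(X,W); interpreted as 0 when Var X = 0 (automatic from z/0 = 0),
   and, when Var X = infinity, as the limiting value Cov(X,W)/sqrt(Var W)
   obtained by cancelling sqrt(Var X). *)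
definition sd_times_cor :: "'a measure \<Rightarrow> ('a \<Rightarrow> real) \<Rightarrow> ('a \<Rightarrow> real) \<Rightarrow> real" where
  "sd_times_cor M X W =
     (if var_ext M X < \<infinity> then sqrt (var_real M X) * pearson_cor M X W
      else covar M X W / sqrt (var_real M W))"

end

theory Submission
  imports Defs
begin

lemma norm_sq_vec: "(norm (x::real^'n::finite))\<^sup>2 = (\<Sum>i\<in>UNIV. (x$i)\<^sup>2)"
  unfolding norm_vec_def L2_set_def
  by (simp add: sum_nonneg)

lemma nn_integral_vec_prod:
  fixes h :: "'n::finite \<Rightarrow> real \<Rightarrow> real"
  assumes hm: "\<And>i. h i \<in> borel_measurable borel" and hn: "\<And>i x. 0 \<le> h i x"
  shows "(\<integral>\<^sup>+x. ennreal (\<Prod>i\<in>UNIV. h i (x$i)) \<partial>(lborel::(real^'n) measure))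
         = (\<Prod>i\<in>UNIV. \<integral>\<^sup>+x. ennreal (h i x) \<partial>lborel)"
proof -
  define f where "f b x = ennreal (h (THE i. b = axis i (1::real)) x)" for b :: "real^'n" and x
  have fi: "f (axis i 1) x = ennreal (h i x)" for i x
    unfolding f_def by (rule arg_cong[where f=ennreal]) (auto simp: axis_eq_axis)
  have fi': "f (axis i 1) = (\<lambda>x. ennreal (h i x))" for i
    by (rule ext) (simp add: fi)
  have B: "(Basis :: (real^'n) set) = (\<lambda>i. axis i 1) ` UNIV"
    unfolding Basis_vec_def by auto
  have inj: "inj (\<lambda>i::'n. axis i (1::real))"
    by (auto simp: inj_def axis_eq_axis)
  have "(\<integral>\<^sup>+x. (\<Prod>b\<in>Basis. f b (x \<bullet> b)) \<partial>(lborel::(real^'n) measure))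
        = (\<Prod>b\<in>Basis. \<integral>\<^sup>+x. f b x \<partial>lborel)"
    by (rule nn_integral_lborel_prod) (auto simp: B fi hm hn)
  moreover have "(\<Prod>b\<in>Basis. f b (x \<bullet> b)) = ennreal (\<Prod>i\<in>UNIV. h i (x$i))" for x :: "real^'n"
    unfolding B by (subst prod.reindex[OF inj]) (simp add: fi inner_axis prod_ennreal hn)
  moreover have "(\<Prod>b\<in>Basis. \<integral>\<^sup>+x. f b x \<partial>lborel) = (\<Prod>i\<in>UNIV. \<integral>\<^sup>+x. ennreal (h i x) \<partial>lborel)"
    unfolding B by (subst prod.reindex[OF inj]) (simp add: fi')
  ultimately show ?thesis by simp
qed
definition pdf :: "real^'n::finite \<Rightarrow> real \<Rightarrow> real^'n \<Rightarrow> real" where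
  "pdf \<theta> v y = (\<Prod>i\<in>UNIV. normal_density (\<theta>$i) (sqrt v) (y$i))"
lemma pdf_meas[measurable]: "pdf \<theta> v \<in> borel_measurable borel"
  unfolding pdf_def by measurable
lemma pdf_nonneg: "0 \<le> pdf \<theta> v y"
  unfolding pdf_def by (simp add: prod_nonneg)

definition mv :: "real \<Rightarrow> nat \<Rightarrow> real" where
  "mv v k = fact (2 * k) / ((2 / v)^k * fact k)"

lemma mv_nonneg: "0 < v \<Longrightarrow> 0 \<le> mv v k"
  unfolding mv_def by simp

lemma mv_simps: "mv v 0 = 1" "0 < v \<Longrightarrow> mv v 1 = v" "0 < v \<Longrightarrow> mv v 2 = 3 * v^2"
   "0 < v \<Longrightarrow> mv v (Suc 0) = v" "0 < v \<Longrightarrow> mv v (Suc (Suc 0)) = 3 * v^2"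
  unfolding mv_def by (simp_all add: field_simps power2_eq_square fact_numeral)

lemma mom_vec:
  fixes \<theta> :: "real^'n::finite" and e :: "'n \<Rightarrow> nat"
  assumes v: "0 < v"
  shows "has_bochner_integral lborel (\<lambda>y. pdf \<theta> v y * (\<Prod>i\<in>UNIV. (y$i - \<theta>$i)^(2 * e i)))
           (\<Prod>i\<in>UNIV. mv v (e i))"
proof (rule has_bochner_integral_nn_integral)
  show "(\<lambda>y. pdf \<theta> v y * (\<Prod>i\<in>UNIV. (y$i - \<theta>$i)^(2 * e i))) \<in> borel_measurable lborel"
    by measurable
  show "AE x in lborel. 0 \<le> pdf \<theta> v x * (\<Prod>i\<in>UNIV. (x $ i - \<theta> $ i) ^ (2 * e i))"
    by (auto intro!: mult_nonneg_nonneg pdf_nonneg prod_nonneg simp: power_mult)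
  show "0 \<le> (\<Prod>i\<in>UNIV. mv v (e i))" using v by (simp add: prod_nonneg mv_nonneg)
  define h where "h i x = normal_density (\<theta>$i) (sqrt v) x * (x - \<theta>$i)^(2 * e i)" for i x
  have eq: "pdf \<theta> v y * (\<Prod>i\<in>UNIV. (y$i - \<theta>$i)^(2 * e i)) = (\<Prod>i\<in>UNIV. h i (y$i))" for y
    unfolding pdf_def h_def by (simp add: prod.distrib)
  have "(\<integral>\<^sup>+y. ennreal (\<Prod>i\<in>UNIV. h i (y$i)) \<partial>(lborel::(real^'n) measure))
         = (\<Prod>i\<in>UNIV. \<integral>\<^sup>+x. ennreal (h i x) \<partial>lborel)"
    by (rule nn_integral_vec_prod) (auto simp: h_def power_mult)
  also have "\<dots> = (\<Prod>i\<in>UNIV. ennreal (mv v (e i)))"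
  proof (rule prod.cong[OF refl])
    fix i
    have sv: "0 < sqrt v" using v by simp
    have "(\<integral>\<^sup>+x. ennreal (h i x) \<partial>lborel) = ennreal (\<integral>x. h i x \<partial>lborel)"
      unfolding h_def
      by (rule nn_integral_eq_integral) (auto intro: integrable_normal_moment[OF sv] simp: power_mult[symmetric])
    also have "(\<integral>x. h i x \<partial>lborel) = mv v (e i)"
      unfolding h_def mv_def using integral_normal_moment_even[OF sv, where k="e i" and \<mu>="\<theta>$i"] v by simp
    finally show "(\<integral>\<^sup>+x. ennreal (h i x) \<partial>lborel) = ennreal (mv v (e i))" .
  qed
  also have "\<dots> = ennreal (\<Prod>i\<in>UNIV. mv v (e i))"
    using v by (simp add: prod_ennreal mv_nonneg)
  finally show "(\<integral>\<^sup>+y. ennreal (pdf \<theta> v y * (\<Prod>i\<in>UNIV. (y$i - \<theta>$i)^(2 * e i))) \<partial>lborel)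
       = ennreal (\<Prod>i\<in>UNIV. mv v (e i))" by (simp add: eq)
qed
lemma prod_if_pow: "(\<Prod>i\<in>(UNIV::'n::finite set). (a i::real) ^ (2 * (if i = j then 1 else 0))) = (a j)^2"
proof -
  have "(\<Prod>i\<in>UNIV. a i ^ (2 * (if i = j then 1 else 0))) = (\<Prod>i\<in>UNIV. if i = j then (a i)^2 else 1)"
    by (rule prod.cong) auto
  also have "\<dots> = (a j)^2" by (subst prod.delta) auto
  finally show ?thesis .
qed

lemma prod_if_mv: "0 < v \<Longrightarrow> (\<Prod>i\<in>(UNIV::'n::finite set). mv v (if i = j then 1 else 0)) = v"
proof -
  assume v: "0 < v"
  have "(\<Prod>i\<in>(UNIV::'n set). mv v (if i = j then 1 else 0)) = (\<Prod>i\<in>UNIV. if i = j then v else 1)"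
    by (rule prod.cong) (auto simp: mv_simps v)
  then show ?thesis by simp
qed

lemma gm0: "0 < v \<Longrightarrow> has_bochner_integral lborel (pdf (\<theta>::real^'n::finite) v) 1"
  using mom_vec[of v \<theta> "\<lambda>_. 0"] by (simp add: mv_simps)

lemma gm1:
  fixes \<theta> :: "real^'n::finite"
  assumes v: "0 < v"
  shows "has_bochner_integral lborel (\<lambda>y. pdf \<theta> v y * (norm (y - \<theta>))\<^sup>2) (real CARD('n) * v)"
proof -
  have eq: "pdf \<theta> v y * (norm (y - \<theta>))\<^sup>2 =
     (\<Sum>j\<in>UNIV. pdf \<theta> v y * (\<Prod>i\<in>UNIV. (y$i - \<theta>$i)^(2 * (if i = j then 1 else 0))))" for y
    by (simp add: norm_sq_vec prod_if_pow sum_distrib_left)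
  have "has_bochner_integral lborel
     (\<lambda>y. \<Sum>j\<in>UNIV. pdf \<theta> v y * (\<Prod>i\<in>UNIV. (y$i - \<theta>$i)^(2 * (if i = j then 1 else 0))))
     (\<Sum>j\<in>(UNIV::'n set). \<Prod>i\<in>UNIV. mv v (if i = j then 1 else 0))"
    by (rule has_bochner_integral_sum) (rule mom_vec[OF v])
  then show ?thesis using v by (simp add: eq prod_if_mv)
qed

lemma gm2:
  fixes \<theta> :: "real^'n::finite"
  assumes v: "0 < v"
  shows "has_bochner_integral lborel (\<lambda>y. pdf \<theta> v y * ((norm (y - \<theta>))\<^sup>2)\<^sup>2)
            (real CARD('n) * (real CARD('n) + 2) * v\<^sup>2)"
proof -
  define e where "e j k i = (if i = j then 1 else 0) + (if i = k then (1::nat) else 0)" for j k i :: 'n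
  have pe: "(\<Prod>i\<in>UNIV. (a i::real) ^ (2 * e j k i)) = (a j)^2 * (a k)^2" for a j k
    unfolding e_def by (simp add: distrib_left power_add prod.distrib prod_if_pow)
  have me: "(\<Prod>i\<in>UNIV. mv v (e j k i)) = (if j = k then 3 * v^2 else v^2)" for j k
  proof (cases "j = k")
    case True
    have "(\<Prod>i\<in>UNIV. mv v (e j k i)) = (\<Prod>i\<in>UNIV. if i = j then 3 * v^2 else 1)"
      by (rule prod.cong) (auto simp: e_def True mv_simps v)
    then show ?thesis using True by simp
  next
    case False
    have "(\<Prod>i\<in>UNIV. mv v (e j k i)) = (\<Prod>i\<in>UNIV. (if i = j then v else 1) * (if i = k then v else 1))"
      by (rule prod.cong) (auto simp: e_def False mv_simps v)
    also have "\<dots> = v^2" by (simp add: prod.distrib power2_eq_square)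
    finally show ?thesis using False by simp
  qed
  have eq: "pdf \<theta> v y * ((norm (y - \<theta>))\<^sup>2)\<^sup>2 =
     (\<Sum>j\<in>UNIV. \<Sum>k\<in>UNIV. pdf \<theta> v y * (\<Prod>i\<in>UNIV. (y$i - \<theta>$i)^(2 * e j k i)))" for y
  proof -
    have "((norm (y - \<theta>))\<^sup>2)\<^sup>2 = (\<Sum>j\<in>UNIV. \<Sum>k\<in>UNIV. (y$j - \<theta>$j)^2 * (y$k - \<theta>$k)^2)"
      by (simp add: norm_sq_vec power2_eq_square[of "sum _ _"] sum_product)
    then show ?thesis by (simp add: pe sum_distrib_left)
  qed
  have F: "(\<lambda>y. pdf \<theta> v y * ((norm (y - \<theta>))\<^sup>2)\<^sup>2) =
     (\<lambda>y. \<Sum>j\<in>UNIV. \<Sum>k\<in>UNIV. pdf \<theta> v y * (\<Prod>i\<in>UNIV. (y$i - \<theta>$i)^(2 * e j k i)))"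
    by (rule ext) (rule eq)
  have H: "has_bochner_integral lborel
     (\<lambda>y. \<Sum>j\<in>UNIV. \<Sum>k\<in>UNIV. pdf \<theta> v y * (\<Prod>i\<in>UNIV. (y$i - \<theta>$i)^(2 * e j k i)))
     (\<Sum>j\<in>(UNIV::'n set). \<Sum>k\<in>UNIV. \<Prod>i\<in>UNIV. mv v (e j k i))"
    by (intro has_bochner_integral_sum) (rule mom_vec[OF v])
  have V: "(\<Sum>j\<in>(UNIV::'n set). \<Sum>k\<in>UNIV. \<Prod>i\<in>UNIV. mv v (e j k i)) =
        real CARD('n) * (real CARD('n) + 2) * v\<^sup>2"
  proof -
    have "(\<Sum>k\<in>UNIV. \<Prod>i\<in>UNIV. mv v (e j k i)) = (real CARD('n) + 2) * v^2" for j :: 'n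
    proof -
      have "(\<Sum>k\<in>UNIV. \<Prod>i\<in>UNIV. mv v (e j k i)) = (\<Sum>k\<in>(UNIV::'n set). v^2 + (if j = k then 2 * v^2 else 0))"
        by (rule sum.cong) (auto simp: me)
      also have "\<dots> = real CARD('n) * v^2 + 2 * v^2"
        by (simp add: sum.distrib)
      finally show ?thesis by (simp add: algebra_simps)
    qed
    then show ?thesis by simp
  qed
  show ?thesis unfolding F V[symmetric] by (rule H)
qed
lemma pdf_closed:
  fixes \<theta> :: "real^'n::finite"
  assumes v: "0 < v"
  shows "pdf \<theta> v y = (2 * pi* v) powr (- (real CARD('n)/2)) * exp (- (norm (y-\<theta>))\<^sup>2/(2* v))"
proof -
  have pv: "0 < 2 * pi* v" using v by simp
  have nd: "normal_density (\<theta>$i) (sqrt v) (y$i) = (2 * pi* v) powr (-1/2) * exp (- (y$i-\<theta>$i)\<^sup>2/(2* v))" for i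
  proof -
    have "(2 * pi* v) powr (-1/2) = 1 / sqrt (2 * pi* v)"
      using pv by (simp add: powr_minus_divide powr_half_sqrt)
    then show ?thesis unfolding normal_density_def using v by simp
  qed
  have "pdf \<theta> v y = (\<Prod>i\<in>(UNIV::'n set). (2 * pi* v) powr (-1/2)) * (\<Prod>i\<in>UNIV. exp (- (y$i-\<theta>$i)\<^sup>2/(2* v)))"
    unfolding pdf_def nd by (simp add: prod.distrib)
  also have "(\<Prod>i\<in>(UNIV::'n set). (2 * pi* v) powr (-1/2)) = ((2 * pi* v) powr (-1/2)) ^ CARD('n)"
    by simp
  also have "\<dots> = (2 * pi* v) powr (real CARD('n) * (-1/2))"
    using pv by (simp only: powr_power)
  also have "real CARD('n) * (-1/2) = - (real CARD('n)/2)" by simp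
  also have "(\<Prod>i\<in>UNIV. exp (- (y$i-\<theta>$i)\<^sup>2/(2* v))) = exp (\<Sum>i\<in>UNIV. -(y$i-\<theta>$i)\<^sup>2/(2* v))"
    by (simp add: exp_sum)
  also have "(\<Sum>i\<in>UNIV. -(y$i-\<theta>$i)\<^sup>2/(2* v)) = -(norm (y-\<theta>))\<^sup>2/(2* v)"
    by (simp add: norm_sq_vec sum_divide_distrib[symmetric] sum_negf)
  finally show ?thesis .
qed

definition dq :: "real^'n::finite \<Rightarrow> real \<Rightarrow> real \<Rightarrow> real^'n \<Rightarrow> real" where
  "dq \<theta> s t y = pdf \<theta> ((1+t) * s) y *
     ((norm (y-\<theta>))\<^sup>2/(2 * s * (1+t)\<^sup>2) - real CARD('n)/(2 * (1+t)))"

lemma pdf_deriv: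
  fixes \<theta> :: "real^'n::finite"
  assumes s: "0 < s" and t: "-1 < t"
  shows "((\<lambda>t. pdf \<theta> ((1+t) * s) y) has_real_derivative dq \<theta> s t y) (at t)"
proof -
  define a where "a = real CARD('n)/2"
  define R where "R = (norm (y-\<theta>))\<^sup>2"
  define C where "C = (2 * pi * s) powr (-a)"
  define F where "F t = C * ((1+t) powr (-a) * exp (- (R/(2 * s)) * inverse (1+t)))" for t
  have t1: "0 < 1+t" using t by simp
  have D1: "((\<lambda>t. (1+t) powr (-a)) has_real_derivative (-a) * (1+t) powr (-a - 1) * 1) (at t)"
    by (rule DERIV_fun_powr[where g="\<lambda>t. 1+t", simplified]) (auto intro!: derivative_eq_intros simp: t1)
  have D2: "((\<lambda>t. - (R/(2 * s)) * inverse (1+t)) has_real_derivative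
       - (R/(2 * s)) * (- (1 * inverse ((1+t)\<^sup>2)))) (at t)"
  proof (rule DERIV_cmult)
    have "((\<lambda>t. 1+t) has_real_derivative 1) (at t)" by (auto intro!: derivative_eq_intros)
    from DERIV_inverse_fun[OF this] t1
    show "((\<lambda>t. inverse (1+t)) has_real_derivative - (1 * inverse ((1+t)\<^sup>2))) (at t)"
      by (simp add: power2_eq_square)
  qed
  have D3: "((\<lambda>t. exp (- (R/(2 * s)) * inverse (1+t))) has_real_derivative
       exp (- (R/(2 * s)) * inverse (1+t)) * (- (R/(2 * s)) * (- (1 * inverse ((1+t)\<^sup>2))))) (at t)"
    by (rule DERIV_fun_exp[OF D2])
  have D: "(F has_real_derivative C * ((1+t) powr (-a) * (exp (- (R/(2 * s)) * inverse (1+t)) * (- (R/(2 * s)) * (- (1 * inverse ((1+t)\<^sup>2)))))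
      + (-a) * (1+t) powr (-a - 1) * 1 * exp (- (R/(2 * s)) * inverse (1+t)))) (at t)"
    unfolding F_def by (rule DERIV_cmult[OF DERIV_mult'[OF D1 D3]])
  have DUMMY: "(F has_real_derivative C * ((-a) * (1+t) powr (-a - 1) * 1 * exp (- (R/(2 * s)) * inverse (1+t))
      + (1+t) powr (-a) * (exp (- (R/(2 * s)) * inverse (1+t)) * (- (R/(2 * s)) * (- (1 * inverse ((1+t)\<^sup>2))))))) (at t)"
    using D by (simp add: algebra_simps)
  have Feq: "F u = pdf \<theta> ((1+u) * s) y" if "u \<in> {-1<..}" for u
  proof -
    have u: "0 < 1+u" using that by simp
    have "pdf \<theta> ((1+u) * s) y = (2 * pi * ((1+u) * s)) powr (-a) * exp (- R/(2 * ((1+u) * s)))"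
      unfolding a_def R_def by (rule pdf_closed) (use u s in simp)
    also have "(2 * pi * ((1+u) * s)) powr (-a) = C * (1+u) powr (-a)"
      unfolding C_def using u s by (simp add: powr_mult[symmetric] mult_ac)
    also have "- R/(2 * ((1+u) * s)) = - (R/(2 * s)) * inverse (1+u)"
      using u s by (simp add: field_simps)
    finally show ?thesis unfolding F_def by simp
  qed
  have val: "C * ((-a) * (1+t) powr (-a - 1) * 1 * exp (- (R/(2 * s)) * inverse (1+t))
      + (1+t) powr (-a) * (exp (- (R/(2 * s)) * inverse (1+t)) * (- (R/(2 * s)) * (- (1 * inverse ((1+t)\<^sup>2))))))
      = dq \<theta> s t y"
  proof -
    have pm: "(1+t) powr (-a - 1) = (1+t) powr (-a) / (1+t)"
      using t1 by (simp add: powr_diff)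
    have "dq \<theta> s t y = F t * (R/(2 * s * (1+t)\<^sup>2) - a/(1+t))"
      unfolding dq_def Feq[of t, symmetric, OF greaterThan_iff[THEN iffD2, OF t]] R_def a_def
      by (simp add: field_simps)
    then show ?thesis unfolding F_def pm using t1 s
      by (simp add: field_simps power2_eq_square)
  qed
  have "((\<lambda>t. pdf \<theta> ((1+t) * s) y) has_real_derivative C * ((-a) * (1+t) powr (-a - 1) * 1 * exp (- (R/(2 * s)) * inverse (1+t))
      + (1+t) powr (-a) * (exp (- (R/(2 * s)) * inverse (1+t)) * (- (R/(2 * s)) * (- (1 * inverse ((1+t)\<^sup>2))))))) (at t)"
    by (rule has_field_derivative_transform_within_open[OF DUMMY open_greaterThan[of "-1"]]) (use t Feq in auto)
  then show ?thesis by (simp only: val)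
qed
lemma pdf_dom:
  fixes \<theta> :: "real^'n::finite"
  assumes s: "0 < s" and t: "0 \<le> t" "t \<le> b"
  shows "pdf \<theta> ((1+t) * s) y \<le> (1+b) powr (real CARD('n)/2) * pdf \<theta> ((1+b) * s) y"
proof -
  define a where "a = real CARD('n)/2"
  define R where "R = (norm (y-\<theta>))\<^sup>2"
  have a0: "0 \<le> a" unfolding a_def by simp
  have R0: "0 \<le> R" unfolding R_def by simp
  have b1: "0 < 1+b" "0 < 1+t" using t by auto
  have ct: "pdf \<theta> ((1+t) * s) y = (2 * pi * ((1+t) * s)) powr (-a) * exp (- R/(2 * ((1+t) * s)))"
    unfolding a_def R_def by (rule pdf_closed) (use b1 s in simp)
  have cb: "pdf \<theta> ((1+b) * s) y = (2 * pi * ((1+b) * s)) powr (-a) * exp (- R/(2 * ((1+b) * s)))"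
    unfolding a_def R_def by (rule pdf_closed) (use b1 s in simp)
  have p1: "(2 * pi * ((1+t) * s)) powr (-a) \<le> (2 * pi * s) powr (-a)"
    by (rule powr_mono2') (use a0 s t in auto)
  have p2: "(2 * pi * s) powr (-a) = (1+b) powr a * (2 * pi * ((1+b) * s)) powr (-a)"
  proof -
    have "(2 * pi * ((1+b) * s)) powr (-a) = (1+b) powr (-a) * (2 * pi * s) powr (-a)"
      by (simp add: powr_mult[symmetric] mult_ac)
    moreover have "(1+b) powr a * (1+b) powr (-a) = 1"
      using b1 by (simp add: powr_add[symmetric])
    ultimately show ?thesis by (simp add: mult.assoc[symmetric])
  qed
  have e1: "exp (- R/(2 * ((1+t) * s))) \<le> exp (- R/(2 * ((1+b) * s)))"
  proof -
    have "R/(2 * ((1+b) * s)) \<le> R/(2 * ((1+t) * s))"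
      by (rule divide_left_mono) (use R0 s t b1 in \<open>auto intro!: mult_pos_pos mult_right_mono\<close>)
    then show ?thesis by simp
  qed
  have "pdf \<theta> ((1+t) * s) y \<le> (2 * pi * s) powr (-a) * exp (- R/(2 * ((1+b) * s)))"
    unfolding ct by (rule mult_mono[OF p1 e1]) auto
  also have "\<dots> = (1+b) powr a * pdf \<theta> ((1+b) * s) y"
    unfolding cb p2 by (simp add: mult_ac)
  finally show ?thesis unfolding a_def .
qed

lemma dq_bound:
  fixes \<theta> :: "real^'n::finite"
  assumes s: "0 < s" and t: "0 \<le> t" "t \<le> b"
  shows "\<bar>dq \<theta> s t y\<bar> \<le> (1+b) powr (real CARD('n)/2) * pdf \<theta> ((1+b) * s) y *
            ((norm (y-\<theta>))\<^sup>2/(2 * s) + real CARD('n)/2)"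
proof -
  define R where "R = (norm (y-\<theta>))\<^sup>2"
  have R0: "0 \<le> R" unfolding R_def by simp
  have t1: "1 \<le> 1+t" using t by simp
  have "\<bar>R/(2 * s * (1+t)\<^sup>2) - real CARD('n)/(2 * (1+t))\<bar> \<le> R/(2 * s * (1+t)\<^sup>2) + real CARD('n)/(2 * (1+t))"
    using R0 s t by (intro abs_triangle_ineq4[THEN order_trans]) auto
  also have "\<dots> \<le> R/(2 * s) + real CARD('n)/2"
  proof (rule add_mono)
    have "1 \<le> (1+t)\<^sup>2" using t1 by (simp add: one_le_power)
    then have "2 * s \<le> 2 * s * (1+t)\<^sup>2" using s by simp
    then show "R/(2 * s * (1+t)\<^sup>2) \<le> R/(2 * s)"
      using R0 s \<open>1 \<le> (1+t)\<^sup>2\<close> by (intro divide_left_mono) (auto intro!: mult_pos_pos)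
    show "real CARD('n)/(2 * (1+t)) \<le> real CARD('n)/2"
      using t1 by (intro divide_left_mono) auto
  qed
  finally have A: "\<bar>R/(2 * s * (1+t)\<^sup>2) - real CARD('n)/(2 * (1+t))\<bar> \<le> R/(2 * s) + real CARD('n)/2" .
  have "\<bar>dq \<theta> s t y\<bar> = pdf \<theta> ((1+t) * s) y * \<bar>R/(2 * s * (1+t)\<^sup>2) - real CARD('n)/(2 * (1+t))\<bar>"
    unfolding dq_def R_def by (simp add: abs_mult pdf_nonneg)
  also have "\<dots> \<le> ((1+b) powr (real CARD('n)/2) * pdf \<theta> ((1+b) * s) y) * (R/(2 * s) + real CARD('n)/2)"
    by (rule mult_mono[OF pdf_dom[OF s t] A]) (auto simp: pdf_nonneg)
  finally show ?thesis unfolding R_def .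
qed
lemma vec_nth_meas[measurable]: "(\<lambda>x::real^'n::finite. x $ i) \<in> borel_measurable borel"
  by (intro borel_measurable_continuous_onI continuous_intros)

lemma lborel_pair_meas: "f \<in> borel_measurable (borel \<Otimes>\<^sub>M borel) \<Longrightarrow> f \<in> borel_measurable (lborel \<Otimes>\<^sub>M lborel)"
  by (subst measurable_cong_sets[OF sets_pair_measure_cong[OF sets_lborel sets_lborel] refl])

lemma dq_meas0:
  "(\<lambda>(t, y). dq (\<theta>::real^'n::finite) s t y) \<in> borel_measurable (borel \<Otimes>\<^sub>M borel)"
  unfolding dq_def pdf_def normal_density_def by measurable

lemma dq_meas1[measurable]: "dq (\<theta>::real^'n::finite) s t \<in> borel_measurable lborel"
  unfolding dq_def pdf_def normal_density_def by measurable

lemma dom_int: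
  fixes \<theta> :: "real^'n::finite" and \<phi> :: "real^'n \<Rightarrow> real"
  assumes s: "0 < s" and t: "0 \<le> t" "t \<le> b" and [measurable]: "\<phi> \<in> borel_measurable borel"
    and i: "integrable lborel (\<lambda>y. pdf \<theta> ((1+b) * s) y * \<phi> y)"
  shows "integrable lborel (\<lambda>y. pdf \<theta> ((1+t) * s) y * \<phi> y)"
proof (rule Bochner_Integration.integrable_bound)
  show "integrable lborel (\<lambda>y. (1+b) powr (real CARD('n)/2) * \<bar>pdf \<theta> ((1+b) * s) y * \<phi> y\<bar>)"
    using i by (intro integrable_mult_right integrable_abs)
  show "(\<lambda>y. pdf \<theta> ((1+t) * s) y * \<phi> y) \<in> borel_measurable lborel" by measurable
  show "AE x in lborel. norm (pdf \<theta> ((1+t) * s) x * \<phi> x)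
          \<le> norm ((1+b) powr (real CARD('n)/2) * \<bar>pdf \<theta> ((1+b) * s) x * \<phi> x\<bar>)"
  proof (rule AE_I2)
    fix x
    have "\<bar>pdf \<theta> ((1+t) * s) x * \<phi> x\<bar> = pdf \<theta> ((1+t) * s) x * \<bar>\<phi> x\<bar>"
      by (simp add: abs_mult pdf_nonneg)
    also have "\<dots> \<le> ((1+b) powr (real CARD('n)/2) * pdf \<theta> ((1+b) * s) x) * \<bar>\<phi> x\<bar>"
      by (rule mult_right_mono[OF pdf_dom[OF s t]]) simp
    finally show "norm (pdf \<theta> ((1+t) * s) x * \<phi> x)
          \<le> norm ((1+b) powr (real CARD('n)/2) * \<bar>pdf \<theta> ((1+b) * s) x * \<phi> x\<bar>)"
      by (simp add: abs_mult pdf_nonneg mult_ac)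
  qed
qed
lemma dq_int:
  fixes \<theta> :: "real^'n::finite" and \<phi> :: "real^'n \<Rightarrow> real"
  assumes s: "0 < s" and t: "0 \<le> t" "t \<le> b" and [measurable]: "\<phi> \<in> borel_measurable borel"
    and i1: "integrable lborel (\<lambda>y. pdf \<theta> ((1+b) * s) y * \<phi> y)"
    and i2: "integrable lborel (\<lambda>y. pdf \<theta> ((1+b) * s) y * \<phi> y * (norm (y-\<theta>))\<^sup>2)"
  shows "integrable lborel (\<lambda>y. \<phi> y * dq \<theta> s t y)"
    and "\<bar>\<integral>y. \<phi> y * dq \<theta> s t y \<partial>lborel\<bar> \<le> (1+b) powr (real CARD('n)/2) *
           (\<integral>y. \<bar>pdf \<theta> ((1+b) * s) y * \<phi> y\<bar> * ((norm (y-\<theta>))\<^sup>2/(2 * s) + real CARD('n)/2) \<partial>lborel)"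
proof -
  define K where "K = (1+b) powr (real CARD('n)/2)"
  define B where "B y = \<bar>pdf \<theta> ((1+b) * s) y * \<phi> y\<bar> * ((norm (y-\<theta>))\<^sup>2/(2 * s) + real CARD('n)/2)" for y
  have Bint: "integrable lborel B"
  proof -
    have "integrable lborel (\<lambda>y. (1/(2 * s)) * \<bar>pdf \<theta> ((1+b) * s) y * \<phi> y * (norm (y-\<theta>))\<^sup>2\<bar>
              + (real CARD('n)/2) * \<bar>pdf \<theta> ((1+b) * s) y * \<phi> y\<bar>)"
      using i1 i2 by (intro Bochner_Integration.integrable_add integrable_mult_right integrable_abs)
    moreover have "B y = (1/(2 * s)) * \<bar>pdf \<theta> ((1+b) * s) y * \<phi> y * (norm (y-\<theta>))\<^sup>2\<bar>
              + (real CARD('n)/2) * \<bar>pdf \<theta> ((1+b) * s) y * \<phi> y\<bar>" for y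
      unfolding B_def using s by (simp add: abs_mult field_simps)
    ultimately show ?thesis by (metis (no_types, lifting) ext)
  qed
  have bnd: "\<bar>\<phi> y * dq \<theta> s t y\<bar> \<le> K * B y" for y
  proof -
    have "\<bar>\<phi> y * dq \<theta> s t y\<bar> = \<bar>\<phi> y\<bar> * \<bar>dq \<theta> s t y\<bar>" by (simp add: abs_mult)
    also have "\<dots> \<le> \<bar>\<phi> y\<bar> * (K * pdf \<theta> ((1+b) * s) y * ((norm (y-\<theta>))\<^sup>2/(2 * s) + real CARD('n)/2))"
      unfolding K_def by (rule mult_left_mono[OF dq_bound[OF s t]]) simp
    also have "\<dots> = K * B y" unfolding B_def by (simp add: abs_mult pdf_nonneg mult_ac)
    finally show ?thesis .
  qed
  show int: "integrable lborel (\<lambda>y. \<phi> y * dq \<theta> s t y)"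
  proof (rule Bochner_Integration.integrable_bound)
    show "integrable lborel (\<lambda>y. K * B y)" using Bint by simp
    show "(\<lambda>y. \<phi> y * dq \<theta> s t y) \<in> borel_measurable lborel" by measurable
    show "AE x in lborel. norm (\<phi> x * dq \<theta> s t x) \<le> norm (K * B x)"
      using bnd by (intro AE_I2) (auto intro: order_trans[OF _ abs_ge_self])
  qed
  have "\<bar>\<integral>y. \<phi> y * dq \<theta> s t y \<partial>lborel\<bar> \<le> (\<integral>y. \<bar>\<phi> y * dq \<theta> s t y\<bar> \<partial>lborel)"
    by (rule integral_abs_bound)
  also have "\<dots> \<le> (\<integral>y. K * B y \<partial>lborel)"
    using int Bint bnd by (intro integral_mono) auto
  also have "\<dots> = K * (\<integral>y. B y \<partial>lborel)" by simp
  finally show "\<bar>\<integral>y. \<phi> y * dq \<theta> s t y \<partial>lborel\<bar> \<le> (1+b) powr (real CARD('n)/2) *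
           (\<integral>y. \<bar>pdf \<theta> ((1+b) * s) y * \<phi> y\<bar> * ((norm (y-\<theta>))\<^sup>2/(2 * s) + real CARD('n)/2) \<partial>lborel)"
    unfolding K_def B_def .
qed
lemma ftc_y:
  fixes \<theta> :: "real^'n::finite"
  assumes s: "0 < s" and a: "0 \<le> \<alpha>"
  shows "(LBINT t=(0::real)..\<alpha>. dq \<theta> s t y) = pdf \<theta> ((1+\<alpha>) * s) y - pdf \<theta> ((1+0) * s) y"
proof -
  have cont: "isCont (\<lambda>t. dq \<theta> s t y) t" if "0 \<le> t" for t
  proof -
    have t1: "1 + t \<noteq> 0" using that by simp
    have "isCont (\<lambda>t. pdf \<theta> ((1+t) * s) y) t"
      by (rule DERIV_isCont[OF pdf_deriv[OF s]]) (use that in simp)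
    moreover have "isCont (\<lambda>t. (norm (y-\<theta>))\<^sup>2/(2 * s * (1+t)\<^sup>2) - real CARD('n)/(2 * (1+t))) t"
      using s t1 by (intro continuous_intros) auto
    ultimately show ?thesis unfolding dq_def by (rule isCont_mult)
  qed
  have "(LBINT t=(0::real)..\<alpha>. dq \<theta> s t y) = (\<lambda>t. pdf \<theta> ((1+t) * s) y) \<alpha> - (\<lambda>t. pdf \<theta> ((1+t) * s) y) 0"
  proof (rule interval_integral_FTC_finite)
    show "continuous_on {min 0 \<alpha>..max 0 \<alpha>} (\<lambda>t. dq \<theta> s t y)"
      using a by (intro continuous_at_imp_continuous_on ballI cont) auto
    fix x assume "min 0 \<alpha> \<le> x" "x \<le> max 0 \<alpha>"
    then have "-1 < x" using a by simp
    from pdf_deriv[OF s this, of \<theta> y]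
    show "((\<lambda>t. pdf \<theta> ((1+t) * s) y) has_vector_derivative dq \<theta> s x y) (at x within {min 0 \<alpha>..max 0 \<alpha>})"
      by (simp add: has_real_derivative_iff_has_vector_derivative has_vector_derivative_at_within)
  qed
  then show ?thesis by simp
qed

lemma diff_main:
  fixes \<theta> :: "real^'n::finite" and \<phi> :: "real^'n \<Rightarrow> real"
  assumes s: "0 < s" and a: "0 \<le> \<alpha>" "\<alpha> \<le> b" and [measurable]: "\<phi> \<in> borel_measurable borel"
    and i1: "integrable lborel (\<lambda>y. pdf \<theta> ((1+b) * s) y * \<phi> y)"
    and i2: "integrable lborel (\<lambda>y. pdf \<theta> ((1+b) * s) y * \<phi> y * (norm (y-\<theta>))\<^sup>2)"
  shows "set_integrable lborel {0..\<alpha>} (\<lambda>t. \<integral>y. \<phi> y * dq \<theta> s t y \<partial>lborel)"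
    and "(\<integral>y. pdf \<theta> ((1+\<alpha>) * s) y * \<phi> y \<partial>lborel) - (\<integral>y. pdf \<theta> ((1+0) * s) y * \<phi> y \<partial>lborel)
          = (LINT t:{0..\<alpha>}|lborel. \<integral>y. \<phi> y * dq \<theta> s t y \<partial>lborel)"
proof -
  define K where "K = (1+b) powr (real CARD('n)/2)"
  define B where "B y = \<bar>pdf \<theta> ((1+b) * s) y * \<phi> y\<bar> * ((norm (y-\<theta>))\<^sup>2/(2 * s) + real CARD('n)/2)" for y
  have Bm[measurable]: "B \<in> borel_measurable borel" unfolding B_def by measurable
  have B0: "0 \<le> B y" for y unfolding B_def using s by simp
  have K0: "0 \<le> K" unfolding K_def by simp
  have Bint: "integrable lborel B"
  proof -
    have "integrable lborel (\<lambda>y. (1/(2 * s)) * \<bar>pdf \<theta> ((1+b) * s) y * \<phi> y * (norm (y-\<theta>))\<^sup>2\<bar>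
              + (real CARD('n)/2) * \<bar>pdf \<theta> ((1+b) * s) y * \<phi> y\<bar>)"
      using i1 i2 by (intro Bochner_Integration.integrable_add integrable_mult_right integrable_abs)
    moreover have "B y = (1/(2 * s)) * \<bar>pdf \<theta> ((1+b) * s) y * \<phi> y * (norm (y-\<theta>))\<^sup>2\<bar>
              + (real CARD('n)/2) * \<bar>pdf \<theta> ((1+b) * s) y * \<phi> y\<bar>" for y
      unfolding B_def using s by (simp add: abs_mult field_simps)
    ultimately show ?thesis by (metis (no_types, lifting) ext)
  qed
  have bnd: "\<bar>\<phi> y * dq \<theta> s t y\<bar> \<le> K * B y" if t: "0 \<le> t" "t \<le> b" for y t
  proof -
    have "\<bar>\<phi> y * dq \<theta> s t y\<bar> = \<bar>\<phi> y\<bar> * \<bar>dq \<theta> s t y\<bar>" by (simp add: abs_mult)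
    also have "\<dots> \<le> \<bar>\<phi> y\<bar> * (K * pdf \<theta> ((1+b) * s) y * ((norm (y-\<theta>))\<^sup>2/(2 * s) + real CARD('n)/2))"
      unfolding K_def by (rule mult_left_mono[OF dq_bound[OF s t]]) simp
    also have "\<dots> = K * B y" unfolding B_def by (simp add: abs_mult pdf_nonneg mult_ac)
    finally show ?thesis .
  qed
  define G where "G t y = indicator {0..\<alpha>} t * (\<phi> y * dq \<theta> s t y)" for t y
  define H where "H t y = indicator {0..\<alpha>} t * (K * B y)" for t :: real and y
  have cI: "integrable lborel (\<lambda>t. indicator {0..\<alpha>} t * c)" for c :: real
  proof -
    have "set_integrable lborel {0..\<alpha>} (\<lambda>t. c)"
      by (rule borel_integrable_atLeastAtMost') (rule continuous_on_const)
    then show ?thesis unfolding set_integrable_def by simp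
  qed
  have Hm: "(\<lambda>(t, y). H t y) \<in> borel_measurable (lborel \<Otimes>\<^sub>M lborel)"
    by (rule lborel_pair_meas) (unfold H_def, measurable)
  have Gm: "(\<lambda>(t, y). G t y) \<in> borel_measurable (lborel \<Otimes>\<^sub>M lborel)"
    by (rule lborel_pair_meas) (unfold G_def dq_def pdf_def normal_density_def, measurable)
  have Hint: "integrable (lborel \<Otimes>\<^sub>M lborel) (\<lambda>(t, y). H t y)"
  proof (rule lborel_pair.Fubini_integrable)
    show "(\<lambda>(t, y). H t y) \<in> borel_measurable (lborel \<Otimes>\<^sub>M lborel)" by (rule Hm)
    have "(\<lambda>t. \<integral>y. norm (case (t, y) of (t, y) \<Rightarrow> H t y) \<partial>lborel) = (\<lambda>t. indicator {0..\<alpha>} t * (K * (\<integral>y. B y \<partial>lborel)))"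
      by (rule ext) (simp add: H_def abs_mult B0 K0)
    then show "integrable lborel (\<lambda>t. \<integral>y. norm (case (t, y) of (t, y) \<Rightarrow> H t y) \<partial>lborel)"
      using cI by simp
    show "AE t in lborel. integrable lborel (\<lambda>y. case (t, y) of (t, y) \<Rightarrow> H t y)"
      using Bint by (simp add: H_def)
  qed
  have Gint: "integrable (lborel \<Otimes>\<^sub>M lborel) (\<lambda>(t, y). G t y)"
  proof (rule Bochner_Integration.integrable_bound[OF Hint Gm])
    show "AE x in lborel \<Otimes>\<^sub>M lborel. norm (case x of (t, y) \<Rightarrow> G t y) \<le> norm (case x of (t, y) \<Rightarrow> H t y)"
    proof (rule AE_I2)
      fix x :: "real \<times> (real^'n)"
      obtain t y where x: "x = (t, y)" by (cases x)
      show "norm (case x of (t, y) \<Rightarrow> G t y) \<le> norm (case x of (t, y) \<Rightarrow> H t y)"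
        unfolding x G_def H_def using bnd[of t y] a B0 K0
        by (auto simp: indicator_def abs_mult)
    qed
  qed
  have fst: "integrable lborel (\<lambda>t. \<integral>y. G t y \<partial>lborel)"
    using lborel_pair.integrable_fst[OF Gint] .
  have inner_t: "(\<integral>y. G t y \<partial>lborel) = indicator {0..\<alpha>} t *\<^sub>R (\<integral>y. \<phi> y * dq \<theta> s t y \<partial>lborel)" for t
    unfolding G_def by simp
  show "set_integrable lborel {0..\<alpha>} (\<lambda>t. \<integral>y. \<phi> y * dq \<theta> s t y \<partial>lborel)"
    unfolding set_integrable_def using fst by (simp add: inner_t)
  have inner_y: "(\<integral>t. G t y \<partial>lborel) = \<phi> y * (pdf \<theta> ((1+\<alpha>) * s) y - pdf \<theta> ((1+0) * s) y)" for y
  proof -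
    have "(\<integral>t. G t y \<partial>lborel) = \<phi> y * (\<integral>t. indicator {0..\<alpha>} t *\<^sub>R dq \<theta> s t y \<partial>lborel)"
      unfolding G_def by (simp add: mult_ac)
    also have "(\<integral>t. indicator {0..\<alpha>} t *\<^sub>R dq \<theta> s t y \<partial>lborel) = (LBINT t=(0::real)..\<alpha>. dq \<theta> s t y)"
      using interval_integral_Icc[OF a(1), of "\<lambda>t. dq \<theta> s t y"] by (simp add: set_lebesgue_integral_def)
    also have "\<dots> = pdf \<theta> ((1+\<alpha>) * s) y - pdf \<theta> ((1+0) * s) y"
      by (rule ftc_y[OF s a(1)])
    finally show ?thesis .
  qed
  have F: "(\<integral>y. (\<integral>t. G t y \<partial>lborel) \<partial>lborel) = (\<integral>t. (\<integral>y. G t y \<partial>lborel) \<partial>lborel)"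
    using lborel_pair.Fubini_integral[OF Gint] .
  have ia: "integrable lborel (\<lambda>y. pdf \<theta> ((1+\<alpha>) * s) y * \<phi> y)"
    by (rule dom_int[OF s a _ i1]) simp
  have i0: "integrable lborel (\<lambda>y. pdf \<theta> ((1+0) * s) y * \<phi> y)"
    by (rule dom_int[OF s _ _ _ i1]) (use a in auto)
  have "(\<integral>y. pdf \<theta> ((1+\<alpha>) * s) y * \<phi> y \<partial>lborel) - (\<integral>y. pdf \<theta> ((1+0) * s) y * \<phi> y \<partial>lborel)
      = (\<integral>y. pdf \<theta> ((1+\<alpha>) * s) y * \<phi> y - pdf \<theta> ((1+0) * s) y * \<phi> y \<partial>lborel)"
    using ia i0 by simp
  also have "\<dots> = (\<integral>y. (\<integral>t. G t y \<partial>lborel) \<partial>lborel)"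
    unfolding inner_y by (simp add: algebra_simps)
  also have "\<dots> = (\<integral>t. (\<integral>y. G t y \<partial>lborel) \<partial>lborel)" by (rule F)
  also have "\<dots> = (LINT t:{0..\<alpha>}|lborel. \<integral>y. \<phi> y * dq \<theta> s t y \<partial>lborel)"
    unfolding inner_t set_lebesgue_integral_def ..
  finally show "(\<integral>y. pdf \<theta> ((1+\<alpha>) * s) y * \<phi> y \<partial>lborel) - (\<integral>y. pdf \<theta> ((1+0) * s) y * \<phi> y \<partial>lborel)
          = (LINT t:{0..\<alpha>}|lborel. \<integral>y. \<phi> y * dq \<theta> s t y \<partial>lborel)" .
qed
lemma gauss_pdf: "gauss \<theta> v = density lborel (\<lambda>y. ennreal (pdf \<theta> v y))"
  unfolding gauss_def pdf_def ..

lemma gauss_meas[measurable_dest]: "f \<in> borel_measurable borel \<Longrightarrow> f \<in> borel_measurable (gauss \<theta> v)"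
  unfolding gauss_def by simp

lemma gauss_integral:
  fixes h :: "real^'n::finite \<Rightarrow> real"
  assumes [measurable]: "h \<in> borel_measurable borel"
  shows "integral\<^sup>L (gauss \<theta> v) h = (\<integral>y. pdf \<theta> v y * h y \<partial>lborel)"
  unfolding gauss_pdf by (subst integral_density) (auto simp: pdf_nonneg)

lemma gauss_integrable:
  fixes h :: "real^'n::finite \<Rightarrow> real"
  assumes [measurable]: "h \<in> borel_measurable borel"
  shows "integrable (gauss \<theta> v) h \<longleftrightarrow> integrable lborel (\<lambda>y. pdf \<theta> v y * h y)"
  unfolding gauss_pdf by (subst integrable_density) (auto simp: pdf_nonneg)

lemma gauss_nn:
  fixes h :: "real^'n::finite \<Rightarrow> real"
  assumes [measurable]: "h \<in> borel_measurable borel" and h0: "\<And>y. 0 \<le> h y"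
  shows "(\<integral>\<^sup>+y. ennreal (h y) \<partial>gauss \<theta> v) = (\<integral>\<^sup>+y. ennreal (pdf \<theta> v y * h y) \<partial>lborel)"
  unfolding gauss_pdf by (subst nn_integral_density) (auto simp: pdf_nonneg h0 ennreal_mult)

lemma gauss_var:
  fixes \<theta> :: "real^'n::finite" and X :: "real^'n \<Rightarrow> real"
  assumes [measurable]: "X \<in> borel_measurable borel" and v: "0 < v"
    and i1: "integrable lborel (\<lambda>y. pdf \<theta> v y * X y)"
    and i2: "integrable lborel (\<lambda>y. pdf \<theta> v y * (X y)\<^sup>2)"
  shows "var_ext (gauss \<theta> v) X = ennreal ((\<integral>y. pdf \<theta> v y * (X y)\<^sup>2 \<partial>lborel) - (\<integral>y. pdf \<theta> v y * X y \<partial>lborel)\<^sup>2)"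
    and "var_real (gauss \<theta> v) X = (\<integral>y. pdf \<theta> v y * (X y)\<^sup>2 \<partial>lborel) - (\<integral>y. pdf \<theta> v y * X y \<partial>lborel)\<^sup>2"
    and "0 \<le> (\<integral>y. pdf \<theta> v y * (X y)\<^sup>2 \<partial>lborel) - (\<integral>y. pdf \<theta> v y * X y \<partial>lborel)\<^sup>2"
proof -
  define c where "c = (\<integral>y. pdf \<theta> v y * X y \<partial>lborel)"
  define m2 where "m2 = (\<integral>y. pdf \<theta> v y * (X y)\<^sup>2 \<partial>lborel)"
  have EX: "integral\<^sup>L (gauss \<theta> v) X = c" unfolding c_def by (rule gauss_integral) simp
  have hb: "has_bochner_integral lborel (\<lambda>y. pdf \<theta> v y * (X y)\<^sup>2 - (2 * c) * (pdf \<theta> v y * X y) + c\<^sup>2 * pdf \<theta> v y)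
      (m2 - (2 * c) * c + c\<^sup>2 * 1)"
    unfolding m2_def c_def
    by (intro has_bochner_integral_add has_bochner_integral_diff has_bochner_integral_mult_right
          has_bochner_integral_integrable i1 i2 gm0 v)
  have eqf: "pdf \<theta> v y * (X y - c)\<^sup>2 = pdf \<theta> v y * (X y)\<^sup>2 - (2 * c) * (pdf \<theta> v y * X y) + c\<^sup>2 * pdf \<theta> v y" for y
    by (simp add: power2_eq_square algebra_simps)
  have F: "(\<lambda>y. pdf \<theta> v y * (X y - c)\<^sup>2) = (\<lambda>y. pdf \<theta> v y * (X y)\<^sup>2 - (2 * c) * (pdf \<theta> v y * X y) + c\<^sup>2 * pdf \<theta> v y)"
    by (rule ext) (rule eqf)
  have val: "m2 - (2 * c) * c + c\<^sup>2 * 1 = m2 - c\<^sup>2" by (simp add: power2_eq_square)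
  have hb': "has_bochner_integral lborel (\<lambda>y. pdf \<theta> v y * (X y - c)\<^sup>2) (m2 - c\<^sup>2)"
    unfolding F val[symmetric] by (rule hb)
  have "m2 - c\<^sup>2 = (\<integral>y. pdf \<theta> v y * (X y - c)\<^sup>2 \<partial>lborel)"
    using hb' by (simp add: has_bochner_integral_iff)
  also have "\<dots> \<ge> 0" by (rule integral_nonneg_AE) (simp add: pdf_nonneg)
  finally have nn: "0 \<le> m2 - c\<^sup>2" .
  have "var_ext (gauss \<theta> v) X = (\<integral>\<^sup>+y. ennreal ((X y - c)\<^sup>2) \<partial>gauss \<theta> v)"
    unfolding var_ext_def EX ..
  also have "\<dots> = (\<integral>\<^sup>+y. ennreal (pdf \<theta> v y * (X y - c)\<^sup>2) \<partial>lborel)"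
    by (rule gauss_nn) auto
  also have "\<dots> = ennreal (m2 - c\<^sup>2)"
    using hb' by (subst nn_integral_eq_integral) (auto simp: pdf_nonneg has_bochner_integral_iff)
  finally have V: "var_ext (gauss \<theta> v) X = ennreal (m2 - c\<^sup>2)" .
  then show "var_ext (gauss \<theta> v) X = ennreal ((\<integral>y. pdf \<theta> v y * (X y)\<^sup>2 \<partial>lborel) - (\<integral>y. pdf \<theta> v y * X y \<partial>lborel)\<^sup>2)"
    unfolding m2_def c_def .
  show "var_real (gauss \<theta> v) X = (\<integral>y. pdf \<theta> v y * (X y)\<^sup>2 \<partial>lborel) - (\<integral>y. pdf \<theta> v y * X y \<partial>lborel)\<^sup>2"
    unfolding var_real_def V using nn unfolding m2_def c_def by simp
  show "0 \<le> (\<integral>y. pdf \<theta> v y * (X y)\<^sup>2 \<partial>lborel) - (\<integral>y. pdf \<theta> v y * X y \<partial>lborel)\<^sup>2"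
    using nn unfolding m2_def c_def .
qed

lemma varW:
  fixes \<theta> :: "real^'n::finite"
  assumes v: "0 < v"
  shows "var_ext (gauss \<theta> v) (\<lambda>y. (norm (y-\<theta>))\<^sup>2) = ennreal (2 * real CARD('n) * v\<^sup>2)"
    and "var_real (gauss \<theta> v) (\<lambda>y. (norm (y-\<theta>))\<^sup>2) = 2 * real CARD('n) * v\<^sup>2"
    and "integral\<^sup>L (gauss \<theta> v) (\<lambda>y. (norm (y-\<theta>))\<^sup>2) = real CARD('n) * v"
proof -
  have m1: "(\<integral>y. pdf \<theta> v y * (norm (y-\<theta>))\<^sup>2 \<partial>lborel) = real CARD('n) * v"
    using gm1[where \<theta>=\<theta>, OF v] by (simp add: has_bochner_integral_iff)
  have m2: "(\<integral>y. pdf \<theta> v y * (norm (y-\<theta>))^4 \<partial>lborel) = real CARD('n) * (real CARD('n) + 2) * v\<^sup>2"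
    using gm2[where \<theta>=\<theta>, OF v] by (simp add: has_bochner_integral_iff)
  have e: "real CARD('n) * (real CARD('n) + 2) * v\<^sup>2 - (real CARD('n) * v)\<^sup>2 = 2 * real CARD('n) * v\<^sup>2"
    by (simp add: algebra_simps power2_eq_square)
  note G = gauss_var[of "\<lambda>y. (norm (y-\<theta>))\<^sup>2" v \<theta>, OF _ v]
  have i1: "integrable lborel (\<lambda>y. pdf \<theta> v y * (norm (y-\<theta>))\<^sup>2)"
    using gm1[where \<theta>=\<theta>, OF v] by (simp add: has_bochner_integral_iff)
  have i2: "integrable lborel (\<lambda>y. pdf \<theta> v y * ((norm (y-\<theta>))\<^sup>2)\<^sup>2)"
    using gm2[where \<theta>=\<theta>, OF v] by (simp add: has_bochner_integral_iff)
  show "var_ext (gauss \<theta> v) (\<lambda>y. (norm (y-\<theta>))\<^sup>2) = ennreal (2 * real CARD('n) * v\<^sup>2)"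
    using G(1)[OF _ i1 i2] by (simp add: m1 m2 e)
  show "var_real (gauss \<theta> v) (\<lambda>y. (norm (y-\<theta>))\<^sup>2) = 2 * real CARD('n) * v\<^sup>2"
    using G(2)[OF _ i1 i2] by (simp add: m1 m2 e)
  show "integral\<^sup>L (gauss \<theta> v) (\<lambda>y. (norm (y-\<theta>))\<^sup>2) = real CARD('n) * v"
    by (subst gauss_integral) (simp_all add: m1)
qed
lemma var_ext_finite_sq:
  assumes [measurable]: "X \<in> borel_measurable M" and fin: "var_ext M X < \<infinity>"
  shows "integrable M (\<lambda>x. (X x - integral\<^sup>L M X)\<^sup>2)"
    and "var_real M X = (\<integral>x. (X x - integral\<^sup>L M X)\<^sup>2 \<partial>M)"
proof -
  show I: "integrable M (\<lambda>x. (X x - integral\<^sup>L M X)\<^sup>2)"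
    using fin unfolding var_ext_def by (auto simp: integrable_iff_bounded)
  have "var_ext M X = ennreal (\<integral>x. (X x - integral\<^sup>L M X)\<^sup>2 \<partial>M)"
    unfolding var_ext_def by (rule nn_integral_eq_integral[OF I]) simp
  then show "var_real M X = (\<integral>x. (X x - integral\<^sup>L M X)\<^sup>2 \<partial>M)"
    unfolding var_real_def by simp
qed

lemma covar_zero_if_var_zero:
  assumes [measurable]: "X \<in> borel_measurable M" "W \<in> borel_measurable M" and z: "var_ext M X = 0"
  shows "covar M X W = 0"
proof -
  have "AE x in M. ennreal ((X x - integral\<^sup>L M X)\<^sup>2) = 0"
    using z unfolding var_ext_def by (subst (asm) nn_integral_0_iff_AE) auto
  then have "AE x in M. (X x - integral\<^sup>L M X) * (W x - integral\<^sup>L M W) = 0"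
    by eventually_elim simp
  then have "covar M X W = (\<integral>x. 0 \<partial>M)"
    unfolding covar_def by (intro integral_cong_AE) auto
  then show ?thesis by simp
qed

lemma stc_eq:
  assumes [measurable]: "X \<in> borel_measurable M" "W \<in> borel_measurable M"
  shows "sd_times_cor M X W = covar M X W / sqrt (var_real M W)"
proof (cases "var_ext M X < \<infinity>")
  case True
  show ?thesis
  proof (cases "var_real M X = 0")
    case z: True
    then have "var_ext M X = 0" using True unfolding var_real_def by (auto simp: enn2real_eq_0_iff)
    then have "covar M X W = 0" by (rule covar_zero_if_var_zero[rotated 2]) simp_all
    then show ?thesis unfolding sd_times_cor_def pearson_cor_def using True z by simp
  next
    case False
    then have "0 < var_real M X" unfolding var_real_def
      using enn2real_nonneg[of "var_ext M X"] by linarith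
    then have "0 < sqrt (var_real M X)" by simp
    then show ?thesis unfolding sd_times_cor_def pearson_cor_def using True by simp
  qed
next
  case False
  then show ?thesis unfolding sd_times_cor_def by simp
qed

lemma covar_CS:
  assumes [measurable]: "X \<in> borel_measurable M" "W \<in> borel_measurable M"
    and fX: "var_ext M X < \<infinity>" and fW: "var_ext M W < \<infinity>"
    and pX: "0 < var_real M X" and pW: "0 < var_real M W"
  shows "\<bar>covar M X W\<bar> \<le> sqrt (var_real M X) * sqrt (var_real M W)"
proof -
  define A where "A x = X x - integral\<^sup>L M X" for x
  define B where "B x = W x - integral\<^sup>L M W" for x
  have [measurable]: "A \<in> borel_measurable M" "B \<in> borel_measurable M" unfolding A_def B_def by auto
  note IA = var_ext_finite_sq[OF _ fX] and IB = var_ext_finite_sq[OF _ fW]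
  define vX where "vX = var_real M X"
  define vW where "vW = var_real M W"
  define l where "l = sqrt vW / sqrt vX"
  have l0: "0 < l" unfolding l_def vX_def vW_def using pX pW by simp
  have iA: "integrable M (\<lambda>x. (A x)\<^sup>2)" and eA: "vX = (\<integral>x. (A x)\<^sup>2 \<partial>M)"
    using IA unfolding A_def vX_def by auto
  have iB: "integrable M (\<lambda>x. (B x)\<^sup>2)" and eB: "vW = (\<integral>x. (B x)\<^sup>2 \<partial>M)"
    using IB unfolding B_def vW_def by auto
  have pt: "\<bar>A x * B x\<bar> \<le> (l * (A x)\<^sup>2 + (B x)\<^sup>2 / l) / 2" for x
  proof -
    have "0 \<le> (l * \<bar>A x\<bar> - \<bar>B x\<bar>)\<^sup>2" by simp
    then have "2 * l * (\<bar>A x\<bar> * \<bar>B x\<bar>) \<le> l\<^sup>2 * (A x)\<^sup>2 + (B x)\<^sup>2"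
      by (simp add: power2_eq_square algebra_simps)
    moreover have "l * (l * (A x)\<^sup>2 + (B x)\<^sup>2 / l) = l\<^sup>2 * (A x)\<^sup>2 + (B x)\<^sup>2"
      using l0 by (simp add: field_simps power2_eq_square)
    ultimately have "2 * l * \<bar>A x * B x\<bar> \<le> l * (l * (A x)\<^sup>2 + (B x)\<^sup>2 / l)"
      by (simp add: abs_mult)
    then have "2 * \<bar>A x * B x\<bar> \<le> l * (A x)\<^sup>2 + (B x)\<^sup>2 / l"
      using l0 by (simp add: mult.assoc mult_le_cancel_left_pos)
    then show ?thesis by simp
  qed
  have iR: "integrable M (\<lambda>x. (l * (A x)\<^sup>2 + (B x)\<^sup>2 / l) / 2)"
    using iA iB by auto
  have iAB: "integrable M (\<lambda>x. A x * B x)"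
  proof (rule Bochner_Integration.integrable_bound[OF iR])
    show "(\<lambda>x. A x * B x) \<in> borel_measurable M" by measurable
    show "AE x in M. norm (A x * B x) \<le> norm ((l * (A x)\<^sup>2 + (B x)\<^sup>2 / l) / 2)"
      by (intro AE_I2) (simp only: real_norm_def, rule order_trans[OF pt abs_ge_self])
  qed
  have "\<bar>covar M X W\<bar> = \<bar>\<integral>x. A x * B x \<partial>M\<bar>" unfolding covar_def A_def B_def ..
  also have "\<dots> \<le> (\<integral>x. \<bar>A x * B x\<bar> \<partial>M)" by (rule integral_abs_bound)
  also have "\<dots> \<le> (\<integral>x. (l * (A x)\<^sup>2 + (B x)\<^sup>2 / l) / 2 \<partial>M)"
    using iAB iR pt by (intro integral_mono) auto
  also have "\<dots> = (l * vX + vW / l) / 2"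
    using iA iB by (simp add: eA eB)
  also have "\<dots> = sqrt vX * sqrt vW"
  proof -
    have sX: "0 < sqrt vX" and sW: "0 < sqrt vW" using pX pW unfolding vX_def vW_def by auto
    have "vX = sqrt vX * sqrt vX" "vW = sqrt vW * sqrt vW" using pX pW unfolding vX_def vW_def by auto
    then show ?thesis unfolding l_def using sX sW by (simp add: field_simps)
  qed
  finally show ?thesis unfolding vX_def vW_def .
qed

lemma stc_bound:
  assumes [measurable]: "X \<in> borel_measurable M" "W \<in> borel_measurable M"
    and fX: "var_ext M X < \<infinity>" and fW: "var_ext M W < \<infinity>" and pW: "0 < var_real M W"
  shows "\<bar>sd_times_cor M X W\<bar> \<le> sqrt (var_real M X)"
proof (cases "var_real M X = 0")
  case True
  then show ?thesis unfolding sd_times_cor_def pearson_cor_def using fX by simp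
next
  case False
  then have pX: "0 < var_real M X" unfolding var_real_def
    using enn2real_nonneg[of "var_ext M X"] by linarith
  have "\<bar>sd_times_cor M X W\<bar> = \<bar>covar M X W\<bar> / sqrt (var_real M W)"
    using pW by (simp add: stc_eq)
  also have "\<dots> \<le> sqrt (var_real M X) * sqrt (var_real M W) / sqrt (var_real M W)"
    using pW by (intro divide_right_mono covar_CS[OF _ _ fX fW pX pW]) auto
  also have "\<dots> = sqrt (var_real M X)" using pW by simp
  finally show ?thesis .
qed
lemma covar_gauss:
  fixes \<theta> :: "real^'n::finite" and X :: "real^'n \<Rightarrow> real"
  assumes [measurable]: "X \<in> borel_measurable borel" and v: "0 < v"
    and i1: "integrable lborel (\<lambda>y. pdf \<theta> v y * X y)"
    and i2: "integrable lborel (\<lambda>y. pdf \<theta> v y * X y * (norm (y-\<theta>))\<^sup>2)"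
  shows "covar (gauss \<theta> v) X (\<lambda>y. (norm (y-\<theta>))\<^sup>2) =
     (\<integral>y. pdf \<theta> v y * X y * (norm (y-\<theta>))\<^sup>2 \<partial>lborel) - real CARD('n) * v * (\<integral>y. pdf \<theta> v y * X y \<partial>lborel)"
proof -
  define c where "c = (\<integral>y. pdf \<theta> v y * X y \<partial>lborel)"
  define m where "m = real CARD('n) * v"
  define IXW where "IXW = (\<integral>y. pdf \<theta> v y * X y * (norm (y-\<theta>))\<^sup>2 \<partial>lborel)"
  have EX: "integral\<^sup>L (gauss \<theta> v) X = c" unfolding c_def by (rule gauss_integral) simp
  have EW: "integral\<^sup>L (gauss \<theta> v) (\<lambda>y. (norm (y-\<theta>))\<^sup>2) = m" unfolding m_def by (rule varW(3)[OF v])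
  have hb: "has_bochner_integral lborel (\<lambda>y. pdf \<theta> v y * X y * (norm (y-\<theta>))\<^sup>2 - m * (pdf \<theta> v y * X y)
          - c * (pdf \<theta> v y * (norm (y-\<theta>))\<^sup>2) + (c * m) * pdf \<theta> v y)
      (IXW - m * c - c * (real CARD('n) * v) + (c * m) * 1)"
    unfolding IXW_def c_def
    by (intro has_bochner_integral_add has_bochner_integral_diff has_bochner_integral_mult_right
          has_bochner_integral_integrable i1 i2 gm0 gm1 v)
  have F: "(\<lambda>y. pdf \<theta> v y * ((X y - c) * ((norm (y-\<theta>))\<^sup>2 - m))) = (\<lambda>y. pdf \<theta> v y * X y * (norm (y-\<theta>))\<^sup>2 - m * (pdf \<theta> v y * X y)
          - c * (pdf \<theta> v y * (norm (y-\<theta>))\<^sup>2) + (c * m) * pdf \<theta> v y)"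
    by (rule ext) (simp add: algebra_simps)
  have val: "IXW - m * c - c * (real CARD('n) * v) + (c * m) * 1 = IXW - m * c" unfolding m_def by simp
  have hb': "has_bochner_integral lborel (\<lambda>y. pdf \<theta> v y * ((X y - c) * ((norm (y-\<theta>))\<^sup>2 - m))) (IXW - m * c)"
    using hb unfolding val F[symmetric] .
  have "covar (gauss \<theta> v) X (\<lambda>y. (norm (y-\<theta>))\<^sup>2) = integral\<^sup>L (gauss \<theta> v) (\<lambda>y. (X y - c) * ((norm (y-\<theta>))\<^sup>2 - m))"
    unfolding covar_def EX EW ..
  also have "\<dots> = (\<integral>y. pdf \<theta> v y * ((X y - c) * ((norm (y-\<theta>))\<^sup>2 - m)) \<partial>lborel)"
    by (rule gauss_integral) simp
  also have "\<dots> = IXW - m * c" using hb' by (simp add: has_bochner_integral_iff)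
  finally show ?thesis unfolding IXW_def m_def c_def .
qed

lemma h_id:
  fixes \<theta> :: "real^'n::finite" and X :: "real^'n \<Rightarrow> real"
  assumes [measurable]: "X \<in> borel_measurable borel" and s: "0 < s" and t: "0 \<le> t"
    and i1: "integrable lborel (\<lambda>y. pdf \<theta> ((1+t) * s) y * X y)"
    and i2: "integrable lborel (\<lambda>y. pdf \<theta> ((1+t) * s) y * X y * (norm (y-\<theta>))\<^sup>2)"
  shows "sqrt (real CARD('n)) / (sqrt 2 * (1 + t)) *
           sd_times_cor (gauss \<theta> ((1 + t) * s)) X (\<lambda>y. (norm (y - \<theta>))\<^sup>2)
         = (\<integral>y. X y * dq \<theta> s t y \<partial>lborel)"
proof -
  define v where "v = (1+t) * s"
  have v: "0 < v" unfolding v_def using s t by simp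
  define n where "n = real CARD('n)"
  have n: "0 < n" unfolding n_def by simp
  define IX where "IX = (\<integral>y. pdf \<theta> v y * X y \<partial>lborel)"
  define IXW where "IXW = (\<integral>y. pdf \<theta> v y * X y * (norm (y-\<theta>))\<^sup>2 \<partial>lborel)"
  have cov: "covar (gauss \<theta> v) X (\<lambda>y. (norm (y-\<theta>))\<^sup>2) = IXW - n * v * IX"
    unfolding IXW_def IX_def n_def by (rule covar_gauss[OF _ v]) (use i1 i2 in \<open>simp_all add: v_def\<close>)
  have sq: "sqrt (var_real (gauss \<theta> v) (\<lambda>y. (norm (y-\<theta>))\<^sup>2)) = sqrt 2 * sqrt n * v"
    unfolding varW(2)[OF v] n_def using v by (simp add: real_sqrt_mult)
  have stc: "sd_times_cor (gauss \<theta> v) X (\<lambda>y. (norm (y-\<theta>))\<^sup>2) = (IXW - n * v * IX) / (sqrt 2 * sqrt n * v)"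
    by (subst stc_eq) (simp_all add: cov sq gauss_meas)
  have dqi: "(\<integral>y. X y * dq \<theta> s t y \<partial>lborel) = (1/(2 * s * (1+t)\<^sup>2)) * IXW - (n/(2 * (1+t))) * IX"
  proof -
    have "(\<lambda>y. X y * dq \<theta> s t y) = (\<lambda>y. (1/(2 * s * (1+t)\<^sup>2)) * (pdf \<theta> v y * X y * (norm (y-\<theta>))\<^sup>2) - (n/(2 * (1+t))) * (pdf \<theta> v y * X y))"
      unfolding dq_def v_def n_def by (rule ext) (simp add: algebra_simps)
    moreover have "integrable lborel (\<lambda>y. pdf \<theta> v y * X y * (norm (y-\<theta>))\<^sup>2)" using i2 unfolding v_def .
    moreover have "integrable lborel (\<lambda>y. pdf \<theta> v y * X y)" using i1 unfolding v_def .
    ultimately show ?thesis unfolding IXW_def IX_def by simp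
  qed
  have s2: "sqrt n / (sqrt 2 * (1 + t)) * ((IXW - n * v * IX) / (sqrt 2 * sqrt n * v))
        = (1/(2 * s * (1+t)\<^sup>2)) * IXW - (n/(2 * (1+t))) * IX"
  proof -
    have sn: "sqrt n \<noteq> 0" and t1: "1 + t \<noteq> 0" and vv: "v \<noteq> 0" using n t v by auto
    have "sqrt n / (sqrt 2 * (1 + t)) * ((IXW - n * v * IX) / (sqrt 2 * sqrt n * v))
        = (sqrt n * (IXW - n * v * IX)) / (sqrt n * ((sqrt 2 * sqrt 2) * (1+t) * v))"
      by (simp add: mult_ac)
    also have "\<dots> = (IXW - n * v * IX) / ((sqrt 2 * sqrt 2) * (1+t) * v)"
      using sn by (rule mult_divide_mult_cancel_left)
    also have "\<dots> = (IXW - n * v * IX) / (2 * (1+t) * v)" by simp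
    finally have "sqrt n / (sqrt 2 * (1 + t)) * ((IXW - n * v * IX) / (sqrt 2 * sqrt n * v)) = (IXW - n * v * IX) / (2 * (1+t) * v)" .
    also have "\<dots> = IXW / (2 * (1+t) * v) - n * v * IX / (2 * (1+t) * v)"
      by (rule diff_divide_distrib)
    also have "n * v * IX / (2 * (1+t) * v) = (n/(2 * (1+t))) * IX"
    proof -
      have "n * v * IX / (2 * (1+t) * v) = ((n * IX) * v) / ((2 * (1+t)) * v)" by (simp add: mult_ac)
      also have "\<dots> = (n * IX) / (2 * (1+t))" using vv by (rule mult_divide_mult_cancel_right)
      finally show ?thesis by simp
    qed
    also have "2 * (1+t) * v = 2 * s * (1+t)\<^sup>2" unfolding v_def power2_eq_square by (simp add: mult_ac)
    also have "IXW / (2 * s * (1+t)\<^sup>2) = (1/(2 * s * (1+t)\<^sup>2)) * IXW" by simp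
    finally show ?thesis .
  qed
  show ?thesis
    using stc dqi s2 unfolding v_def n_def by simp
qed
lemma sq_norm_bound: "(norm (a - b::real^'n::finite))\<^sup>2 \<le> 2 * (norm a)\<^sup>2 + 2 * (norm b)\<^sup>2"
proof -
  have "norm (a - b) \<le> norm a + norm b" by (rule norm_triangle_ineq4)
  then have "(norm (a - b))\<^sup>2 \<le> (norm a + norm b)\<^sup>2" by (rule power_mono) simp
  also have "\<dots> \<le> 2 * (norm a)\<^sup>2 + 2 * (norm b)\<^sup>2"
    using sum_squares_ge_zero[of "norm a - norm b" 0] by (simp add: power2_eq_square algebra_simps)
  finally show ?thesis .
qed

lemma sq4_norm_bound: "((norm (a - b::real^'n::finite))\<^sup>2)\<^sup>2 \<le> 8 * (norm a)^4 + 8 * (norm b)^4"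
proof -
  have "((norm (a - b))\<^sup>2)\<^sup>2 \<le> (2 * (norm a)\<^sup>2 + 2 * (norm b)\<^sup>2)\<^sup>2"
    by (rule power_mono[OF sq_norm_bound]) simp
  also have "\<dots> \<le> 8 * (norm a)^4 + 8 * (norm b)^4"
    using sum_squares_ge_zero[of "(norm a)\<^sup>2 - (norm b)\<^sup>2" 0]
    by (simp add: power2_eq_square algebra_simps power4_eq_xxxx)
  finally show ?thesis .
qed

lemma int_dom2:
  fixes G F1 F2 :: "'a \<Rightarrow> real"
  assumes "integrable M F1" "integrable M F2" "G \<in> borel_measurable M"
    and b: "\<And>y. \<bar>G y\<bar> \<le> a * F1 y + c * F2 y"
  shows "integrable M G"
proof (rule Bochner_Integration.integrable_bound)
  show "integrable M (\<lambda>y. a * F1 y + c * F2 y)" using assms by auto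
  show "G \<in> borel_measurable M" by fact
  show "AE x in M. norm (G x) \<le> norm (a * F1 x + c * F2 x)"
    by (intro AE_I2) (simp only: real_norm_def, rule order_trans[OF b abs_ge_self])
qed

lemma set_bound:
  fixes h :: "real \<Rightarrow> real"
  assumes a: "0 \<le> \<alpha>" and si: "set_integrable lborel {0..\<alpha>} h" and b: "\<And>t. t \<in> {0..\<alpha>} \<Longrightarrow> \<bar>h t\<bar> \<le> M"
  shows "\<bar>LINT t:{0..\<alpha>}|lborel. h t\<bar> \<le> M * \<alpha>"
proof -
  have ci: "set_integrable lborel {0..\<alpha>} (\<lambda>t. c)" for c :: real
    by (rule borel_integrable_atLeastAtMost') (rule continuous_on_const)
  have cv: "(LINT t:{0..\<alpha>}|lborel. c) = c * \<alpha>" for c :: real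
    using a by (subst set_integral_const) auto
  have "(LINT t:{0..\<alpha>}|lborel. h t) \<le> (LINT t:{0..\<alpha>}|lborel. M)"
    using b by (intro set_integral_mono[OF si ci]) (auto simp: abs_le_iff)
  moreover have "(LINT t:{0..\<alpha>}|lborel. -M) \<le> (LINT t:{0..\<alpha>}|lborel. h t)"
  proof (rule set_integral_mono[OF ci si])
    fix t assume "t \<in> {0..\<alpha>}"
    from b[OF this] show "-M \<le> h t" by (simp add: abs_le_iff)
  qed
  ultimately show ?thesis unfolding cv by (simp add: abs_le_iff)
qed

lemma hbound:
  fixes \<theta> :: "real^'n::finite" and X :: "real^'n \<Rightarrow> real"
  assumes [measurable]: "X \<in> borel_measurable borel" and s: "0 < s" and t: "0 \<le> t"
    and fin: "var_ext (gauss \<theta> ((1 + t) * s)) X < \<infinity>"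
  shows "\<bar>sqrt (real CARD('n)) / (sqrt 2 * (1 + t)) *
           sd_times_cor (gauss \<theta> ((1 + t) * s)) X (\<lambda>y. (norm (y - \<theta>))\<^sup>2)\<bar>
         \<le> sqrt (real CARD('n)) / sqrt 2 * sqrt (var_real (gauss \<theta> ((1 + t) * s)) X)"
proof -
  have v: "0 < (1+t) * s" using s t by simp
  have sb: "\<bar>sd_times_cor (gauss \<theta> ((1 + t) * s)) X (\<lambda>y. (norm (y - \<theta>))\<^sup>2)\<bar>
           \<le> sqrt (var_real (gauss \<theta> ((1 + t) * s)) X)"
    by (rule stc_bound) (use v fin in \<open>auto simp add: gauss_meas varW zero_less_mult_iff\<close>)
  have c: "0 \<le> sqrt (real CARD('n)) / (sqrt 2 * (1 + t))" using t by simp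
  have "\<bar>sqrt (real CARD('n)) / (sqrt 2 * (1 + t)) *
           sd_times_cor (gauss \<theta> ((1 + t) * s)) X (\<lambda>y. (norm (y - \<theta>))\<^sup>2)\<bar>
     \<le> sqrt (real CARD('n)) / (sqrt 2 * (1 + t)) * sqrt (var_real (gauss \<theta> ((1 + t) * s)) X)"
    using mult_left_mono[OF sb c] t by (simp add: abs_mult)
  also have "\<dots> \<le> sqrt (real CARD('n)) / sqrt 2 * sqrt (var_real (gauss \<theta> ((1 + t) * s)) X)"
  proof (rule mult_right_mono)
    show "sqrt (real CARD('n)) / (sqrt 2 * (1 + t)) \<le> sqrt (real CARD('n)) / sqrt 2"
      using t by (intro divide_left_mono) (auto simp: mult_le_cancel_left1)
  qed (simp add: var_real_def)
  finally show ?thesis .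
qed
lemma powr_three_halves: "0 \<le> (x::real) \<Longrightarrow> x powr (3/2) = x * sqrt x"
proof (cases "x = 0")
  case False
  assume x: "0 \<le> x"
  have "x powr (3/2) = x powr (1 + 1/2)" by simp
  also have "\<dots> = x powr 1 * x powr (1/2)" by (rule powr_add)
  also have "\<dots> = x * sqrt x" using x False by (simp add: powr_half_sqrt)
  finally show ?thesis .
qed simp

theorem proposition3:
  fixes \<theta> :: "real^'n::finite" and \<sigma>2 \<beta> :: real and g :: "real^'n \<Rightarrow> real^'n"
  assumes "\<sigma>2 > 0"
    and "g \<in> borel_measurable borel"
    and "\<beta> > 0"
    and "integrable (gauss \<theta> ((1 + \<beta>) * \<sigma>2)) (\<lambda>y. (norm (g y))\<^sup>2)"
    and "integrable (gauss \<theta> ((1 + \<beta>) * \<sigma>2)) (\<lambda>y. (norm (g y))\<^sup>2 * (norm (y - \<theta>))\<^sup>2)"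
  shows
    "(\<forall>\<alpha>. 0 \<le> \<alpha> \<and> \<alpha> < \<beta> \<longrightarrow>
        set_integrable lborel {0..\<alpha>}
          (\<lambda>t. sqrt (real CARD('n)) / (sqrt 2 * (1 + t)) *
                sd_times_cor (gauss \<theta> ((1 + t) * \<sigma>2))
                  (\<lambda>y. (norm (\<theta> - g y))\<^sup>2) (\<lambda>y. (norm (y - \<theta>))\<^sup>2))
      \<and> risk \<theta> \<sigma>2 g \<alpha> - risk \<theta> \<sigma>2 g 0 =
          (LINT t:{0..\<alpha>}|lborel. sqrt (real CARD('n)) / (sqrt 2 * (1 + t)) *
                sd_times_cor (gauss \<theta> ((1 + t) * \<sigma>2))
                  (\<lambda>y. (norm (\<theta> - g y))\<^sup>2) (\<lambda>y. (norm (y - \<theta>))\<^sup>2)))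
   \<and> (\<forall>\<alpha>. 0 \<le> \<alpha> \<and> \<alpha> < \<beta> \<longrightarrow>
        mono_on {0..\<alpha>} (\<lambda>t. var_ext (gauss \<theta> ((1 + t) * \<sigma>2)) (\<lambda>y. (norm (\<theta> - g y))\<^sup>2)) \<longrightarrow>
        (var_ext (gauss \<theta> ((1 + \<alpha>) * \<sigma>2)) (\<lambda>y. (norm (\<theta> - g y))\<^sup>2) = \<infinity>
         \<or> \<bar>risk \<theta> \<sigma>2 g \<alpha> - risk \<theta> \<sigma>2 g 0\<bar>
             \<le> sqrt (real CARD('n)) * \<alpha> / sqrt 2 *
                sqrt (var_real (gauss \<theta> ((1 + \<alpha>) * \<sigma>2)) (\<lambda>y. (norm (\<theta> - g y))\<^sup>2))))
   \<and> (integrable (gauss \<theta> ((1 + \<beta>) * \<sigma>2)) (\<lambda>y. (norm (g y))^4) \<and>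
      integrable (gauss \<theta> ((1 + \<beta>) * \<sigma>2)) (\<lambda>y. (norm (g y))^4 * (norm (y - \<theta>))\<^sup>2) \<longrightarrow>
      (\<exists>C>0. \<exists>\<delta>>0. \<forall>\<alpha>. 0 \<le> \<alpha> \<and> \<alpha> < \<beta> \<and> \<alpha> \<le> \<delta> \<longrightarrow>
         \<bar>risk \<theta> \<sigma>2 g \<alpha> - risk \<theta> \<sigma>2 g 0\<bar>
           \<le> sqrt (real CARD('n)) * \<alpha> / sqrt 2 *
              sqrt (var_real (gauss \<theta> \<sigma>2) (\<lambda>y. (norm (\<theta> - g y))\<^sup>2))
             + C * \<alpha> powr (3/2)))"
proof -
  note s = assms(1) and gm[measurable] = assms(2) and b = assms(3)
  define f where "f y = (norm (\<theta> - g y))\<^sup>2" for y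
  have fm[measurable]: "f \<in> borel_measurable borel" unfolding f_def by measurable
  have fW[measurable]: "(\<lambda>y. f y * (norm (y - \<theta>))\<^sup>2) \<in> borel_measurable borel" by measurable
  have fe: "(\<lambda>y. (norm (\<theta> - g y))\<^sup>2) = f" unfolding f_def ..
  define H where "H t = sqrt (real CARD('n)) / (sqrt 2 * (1 + t)) *
                sd_times_cor (gauss \<theta> ((1 + t) * \<sigma>2)) f (\<lambda>y. (norm (y - \<theta>))\<^sup>2)" for t
  define pb where "pb = pdf \<theta> ((1 + \<beta>) * \<sigma>2)"
  have vb: "0 < (1 + \<beta>) * \<sigma>2" using s b by simp
  have A1: "integrable lborel (\<lambda>y. pb y * (norm (g y))\<^sup>2)"
    using assms(4) unfolding pb_def by (subst (asm) gauss_integrable) auto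
  have A2: "integrable lborel (\<lambda>y. pb y * ((norm (g y))\<^sup>2 * (norm (y - \<theta>))\<^sup>2))"
    using assms(5) unfolding pb_def by (subst (asm) gauss_integrable) auto
  have G0: "integrable lborel pb" unfolding pb_def using gm0[where \<theta>=\<theta>, OF vb] by (simp add: has_bochner_integral_iff)
  have G1: "integrable lborel (\<lambda>y. pb y * (norm (y - \<theta>))\<^sup>2)"
    unfolding pb_def using gm1[where \<theta>=\<theta>, OF vb] by (simp add: has_bochner_integral_iff)
  have fb: "f y \<le> 2 * (norm \<theta>)\<^sup>2 + 2 * (norm (g y))\<^sup>2" for y
    unfolding f_def by (rule sq_norm_bound)
  have f0: "0 \<le> f y" for y unfolding f_def by simp
  have pb0: "0 \<le> pb y" for y unfolding pb_def by (rule pdf_nonneg)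
  have iF1: "integrable lborel (\<lambda>y. pdf \<theta> ((1 + \<beta>) * \<sigma>2) y * f y)"
    unfolding pb_def[symmetric]
  proof (rule int_dom2[OF G0 A1])
    show "(\<lambda>y. pb y * f y) \<in> borel_measurable lborel" unfolding pb_def by measurable
    fix y
    have "\<bar>pb y * f y\<bar> = pb y * f y" using pb0 f0 by simp
    also have "\<dots> \<le> pb y * (2 * (norm \<theta>)\<^sup>2 + 2 * (norm (g y))\<^sup>2)" by (rule mult_left_mono[OF fb pb0])
    finally show "\<bar>pb y * f y\<bar> \<le> 2 * (norm \<theta>)\<^sup>2 * pb y + 2 * (pb y * (norm (g y))\<^sup>2)"
      by (simp add: algebra_simps)
  qed
  have iF2: "integrable lborel (\<lambda>y. pdf \<theta> ((1 + \<beta>) * \<sigma>2) y * f y * (norm (y - \<theta>))\<^sup>2)"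
    unfolding pb_def[symmetric]
  proof (rule int_dom2[OF G1 A2])
    show "(\<lambda>y. pb y * f y * (norm (y - \<theta>))\<^sup>2) \<in> borel_measurable lborel" unfolding pb_def by measurable
    fix y
    have "\<bar>pb y * f y * (norm (y - \<theta>))\<^sup>2\<bar> = (pb y * (norm (y - \<theta>))\<^sup>2) * f y" using pb0 f0 by (simp add: mult_ac)
    also have "\<dots> \<le> (pb y * (norm (y - \<theta>))\<^sup>2) * (2 * (norm \<theta>)\<^sup>2 + 2 * (norm (g y))\<^sup>2)"
      by (rule mult_left_mono[OF fb]) (simp add: pb0)
    finally show "\<bar>pb y * f y * (norm (y - \<theta>))\<^sup>2\<bar> \<le> 2 * (norm \<theta>)\<^sup>2 * (pb y * (norm (y - \<theta>))\<^sup>2)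
        + 2 * (pb y * ((norm (g y))\<^sup>2 * (norm (y - \<theta>))\<^sup>2))"
      by (simp add: algebra_simps)
  qed
  have iF2': "integrable lborel (\<lambda>y. pdf \<theta> ((1 + \<beta>) * \<sigma>2) y * (f y * (norm (y - \<theta>))\<^sup>2))"
    using iF2 by (simp add: mult.assoc)
  have hid: "H t = (\<integral>y. f y * dq \<theta> \<sigma>2 t y \<partial>lborel)" if t: "0 \<le> t" "t \<le> \<beta>" for t
    unfolding H_def
  proof (rule h_id[OF fm s t(1)])
    show "integrable lborel (\<lambda>y. pdf \<theta> ((1 + t) * \<sigma>2) y * f y)"
      by (rule dom_int[OF s t fm iF1])
    have "integrable lborel (\<lambda>y. pdf \<theta> ((1 + t) * \<sigma>2) y * (f y * (norm (y - \<theta>))\<^sup>2))"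
      by (rule dom_int[OF s t fW iF2'])
    then show "integrable lborel (\<lambda>y. pdf \<theta> ((1 + t) * \<sigma>2) y * f y * (norm (y - \<theta>))\<^sup>2)"
      by (simp add: mult.assoc)
  qed
  have risk_eq: "risk \<theta> \<sigma>2 g a = (\<integral>y. pdf \<theta> ((1 + a) * \<sigma>2) y * f y \<partial>lborel)" for a
    unfolding risk_def fe by (rule gauss_integral[OF fm])
  have P1: "set_integrable lborel {0..\<alpha>} (\<lambda>t. H t) \<and>
      risk \<theta> \<sigma>2 g \<alpha> - risk \<theta> \<sigma>2 g 0 = (LINT t:{0..\<alpha>}|lborel. H t)"
    if a: "0 \<le> \<alpha>" "\<alpha> < \<beta>" for \<alpha>
  proof -
    have a': "\<alpha> \<le> \<beta>" using a by simp
    note D = diff_main[OF s a(1) a' fm iF1 iF2]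
    have eq: "\<And>t. t \<in> {0..\<alpha>} \<Longrightarrow> H t = (\<integral>y. f y * dq \<theta> \<sigma>2 t y \<partial>lborel)"
      using a by (intro hid) auto
    have "set_integrable lborel {0..\<alpha>} (\<lambda>t. H t)"
      using D(1) by (subst set_integrable_cong[OF refl refl eq]) auto
    moreover have "risk \<theta> \<sigma>2 g \<alpha> - risk \<theta> \<sigma>2 g 0 = (LINT t:{0..\<alpha>}|lborel. H t)"
    proof -
      have "risk \<theta> \<sigma>2 g \<alpha> - risk \<theta> \<sigma>2 g 0 = (LINT t:{0..\<alpha>}|lborel. \<integral>y. f y * dq \<theta> \<sigma>2 t y \<partial>lborel)"
        unfolding risk_eq using D(2) by simp
      also have "\<dots> = (LINT t:{0..\<alpha>}|lborel. H t)"
        using eq by (intro set_lebesgue_integral_cong) auto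
      finally show ?thesis .
    qed
    ultimately show ?thesis by blast
  qed
  have c0: "0 \<le> sqrt (real CARD('n)) / sqrt 2" by simp
  have P2: "var_ext (gauss \<theta> ((1 + \<alpha>) * \<sigma>2)) f = \<infinity> \<or>
      \<bar>risk \<theta> \<sigma>2 g \<alpha> - risk \<theta> \<sigma>2 g 0\<bar> \<le> sqrt (real CARD('n)) * \<alpha> / sqrt 2 *
                sqrt (var_real (gauss \<theta> ((1 + \<alpha>) * \<sigma>2)) f)"
    if a: "0 \<le> \<alpha>" "\<alpha> < \<beta>" and mo: "mono_on {0..\<alpha>} (\<lambda>t. var_ext (gauss \<theta> ((1 + t) * \<sigma>2)) f)" for \<alpha>
  proof (cases "var_ext (gauss \<theta> ((1 + \<alpha>) * \<sigma>2)) f = \<infinity>")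
    case False
    then have fa: "var_ext (gauss \<theta> ((1 + \<alpha>) * \<sigma>2)) f < \<infinity>" by (simp add: top.not_eq_extremum)
    then have fa': "var_ext (gauss \<theta> ((1 + \<alpha>) * \<sigma>2)) f < top" by simp
    have "\<bar>H t\<bar> \<le> sqrt (real CARD('n)) / sqrt 2 * sqrt (var_real (gauss \<theta> ((1 + \<alpha>) * \<sigma>2)) f)"
      if t: "t \<in> {0..\<alpha>}" for t
    proof -
      have le: "var_ext (gauss \<theta> ((1 + t) * \<sigma>2)) f \<le> var_ext (gauss \<theta> ((1 + \<alpha>) * \<sigma>2)) f"
        using mono_onD[OF mo t, of \<alpha>] t a by auto
      have ft: "var_ext (gauss \<theta> ((1 + t) * \<sigma>2)) f < \<infinity>" using le fa by (rule le_less_trans)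
      have "\<bar>H t\<bar> \<le> sqrt (real CARD('n)) / sqrt 2 * sqrt (var_real (gauss \<theta> ((1 + t) * \<sigma>2)) f)"
        unfolding H_def by (rule hbound[OF fm s _ ft]) (use t in simp)
      also have "\<dots> \<le> sqrt (real CARD('n)) / sqrt 2 * sqrt (var_real (gauss \<theta> ((1 + \<alpha>) * \<sigma>2)) f)"
        unfolding var_real_def
        by (intro mult_left_mono[OF _ c0] real_sqrt_le_mono enn2real_mono[OF le fa'])
      finally show ?thesis .
    qed
    then have "\<bar>LINT t:{0..\<alpha>}|lborel. H t\<bar> \<le> (sqrt (real CARD('n)) / sqrt 2 * sqrt (var_real (gauss \<theta> ((1 + \<alpha>) * \<sigma>2)) f)) * \<alpha>"
      using P1[OF a] a by (intro set_bound) auto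
    then show ?thesis using P1[OF a] by (simp add: mult_ac)
  qed simp
  have P3: "\<exists>C>0. \<exists>\<delta>>0. \<forall>\<alpha>. 0 \<le> \<alpha> \<and> \<alpha> < \<beta> \<and> \<alpha> \<le> \<delta> \<longrightarrow>
         \<bar>risk \<theta> \<sigma>2 g \<alpha> - risk \<theta> \<sigma>2 g 0\<bar>
           \<le> sqrt (real CARD('n)) * \<alpha> / sqrt 2 * sqrt (var_real (gauss \<theta> \<sigma>2) f) + C * \<alpha> powr (3/2)"
    if B4: "integrable (gauss \<theta> ((1 + \<beta>) * \<sigma>2)) (\<lambda>y. (norm (g y))^4)"
       "integrable (gauss \<theta> ((1 + \<beta>) * \<sigma>2)) (\<lambda>y. (norm (g y))^4 * (norm (y - \<theta>))\<^sup>2)"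
  proof -
    define W where "W y = (norm (y - \<theta>))\<^sup>2" for y :: "real^'n"
    define n where "n = real CARD('n)"
    define c0 where "c0 = sqrt n / sqrt 2"
    have c0': "0 \<le> c0" unfolding c0_def n_def by simp
    have f2m[measurable]: "(\<lambda>y. (f y)\<^sup>2) \<in> borel_measurable borel" by measurable
    have f2W[measurable]: "(\<lambda>y. (f y)\<^sup>2 * (norm (y - \<theta>))\<^sup>2) \<in> borel_measurable borel" by measurable
    have A4: "integrable lborel (\<lambda>y. pb y * (norm (g y))^4)"
      using B4(1) unfolding pb_def by (subst (asm) gauss_integrable) auto
    have A5: "integrable lborel (\<lambda>y. pb y * ((norm (g y))^4 * (norm (y - \<theta>))\<^sup>2))"
      using B4(2) unfolding pb_def by (subst (asm) gauss_integrable) auto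
    have f2b: "(f y)\<^sup>2 \<le> 8 * (norm \<theta>)^4 + 8 * (norm (g y))^4" for y
      unfolding f_def by (rule sq4_norm_bound)
    have iQ1: "integrable lborel (\<lambda>y. pdf \<theta> ((1 + \<beta>) * \<sigma>2) y * (f y)\<^sup>2)"
      unfolding pb_def[symmetric]
    proof (rule int_dom2[OF G0 A4])
      show "(\<lambda>y. pb y * (f y)\<^sup>2) \<in> borel_measurable lborel" unfolding pb_def by measurable
      fix y
      have "\<bar>pb y * (f y)\<^sup>2\<bar> = pb y * (f y)\<^sup>2" using pb0 by simp
      also have "\<dots> \<le> pb y * (8 * (norm \<theta>)^4 + 8 * (norm (g y))^4)" by (rule mult_left_mono[OF f2b pb0])
      finally show "\<bar>pb y * (f y)\<^sup>2\<bar> \<le> 8 * (norm \<theta>)^4 * pb y + 8 * (pb y * (norm (g y))^4)"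
        by (simp add: algebra_simps)
    qed
    have iQ2: "integrable lborel (\<lambda>y. pdf \<theta> ((1 + \<beta>) * \<sigma>2) y * (f y)\<^sup>2 * (norm (y - \<theta>))\<^sup>2)"
      unfolding pb_def[symmetric]
    proof (rule int_dom2[OF G1 A5])
      show "(\<lambda>y. pb y * (f y)\<^sup>2 * (norm (y - \<theta>))\<^sup>2) \<in> borel_measurable lborel" unfolding pb_def by measurable
      fix y
      have "\<bar>pb y * (f y)\<^sup>2 * (norm (y - \<theta>))\<^sup>2\<bar> = (pb y * (norm (y - \<theta>))\<^sup>2) * (f y)\<^sup>2" using pb0 by (simp add: mult_ac)
      also have "\<dots> \<le> (pb y * (norm (y - \<theta>))\<^sup>2) * (8 * (norm \<theta>)^4 + 8 * (norm (g y))^4)"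
        by (rule mult_left_mono[OF f2b]) (simp add: pb0)
      finally show "\<bar>pb y * (f y)\<^sup>2 * (norm (y - \<theta>))\<^sup>2\<bar> \<le> 8 * (norm \<theta>)^4 * (pb y * (norm (y - \<theta>))\<^sup>2)
          + 8 * (pb y * ((norm (g y))^4 * (norm (y - \<theta>))\<^sup>2))"
        by (simp add: algebra_simps)
    qed
    define M1 where "M1 = (1+\<beta>) powr (real CARD('n)/2) *
           (\<integral>y. \<bar>pdf \<theta> ((1+\<beta>) * \<sigma>2) y * f y\<bar> * ((norm (y-\<theta>))\<^sup>2/(2 * \<sigma>2) + real CARD('n)/2) \<partial>lborel)"
    define M2 where "M2 = (1+\<beta>) powr (real CARD('n)/2) *
           (\<integral>y. \<bar>pdf \<theta> ((1+\<beta>) * \<sigma>2) y * (f y)\<^sup>2\<bar> * ((norm (y-\<theta>))\<^sup>2/(2 * \<sigma>2) + real CARD('n)/2) \<partial>lborel)"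
    have dqb1: "\<bar>\<integral>y. f y * dq \<theta> \<sigma>2 t y \<partial>lborel\<bar> \<le> M1" if "0 \<le> t" "t \<le> \<beta>" for t
      unfolding M1_def by (rule dq_int(2)[OF s that fm iF1 iF2])
    have dqb2: "\<bar>\<integral>y. (f y)\<^sup>2 * dq \<theta> \<sigma>2 t y \<partial>lborel\<bar> \<le> M2" if "0 \<le> t" "t \<le> \<beta>" for t
      unfolding M2_def by (rule dq_int(2)[OF s that f2m iQ1 iQ2])
    have M10: "0 \<le> M1" using dqb1[of 0] b by (meson abs_ge_zero order_trans less_imp_le order_refl)
    have M20: "0 \<le> M2" using dqb2[of 0] b by (meson abs_ge_zero order_trans less_imp_le order_refl)
    define E1 where "E1 t = (\<integral>y. pdf \<theta> ((1+t) * \<sigma>2) y * f y \<partial>lborel)" for t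
    define E2 where "E2 t = (\<integral>y. pdf \<theta> ((1+t) * \<sigma>2) y * (f y)\<^sup>2 \<partial>lborel)" for t
    have dE1: "\<bar>E1 t - E1 0\<bar> \<le> M1 * t" if t: "0 \<le> t" "t \<le> \<beta>" for t
    proof -
      note D = diff_main[OF s t fm iF1 iF2]
      have "E1 t - E1 0 = (LINT u:{0..t}|lborel. \<integral>y. f y * dq \<theta> \<sigma>2 u y \<partial>lborel)"
        unfolding E1_def using D(2) by simp
      also have "\<bar>\<dots>\<bar> \<le> M1 * t"
        by (rule set_bound[OF t(1) D(1)]) (use t in \<open>auto intro!: dqb1\<close>)
      finally show ?thesis .
    qed
    have dE2: "\<bar>E2 t - E2 0\<bar> \<le> M2 * t" if t: "0 \<le> t" "t \<le> \<beta>" for t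
    proof -
      note D = diff_main[OF s t f2m iQ1 iQ2]
      have "E2 t - E2 0 = (LINT u:{0..t}|lborel. \<integral>y. (f y)\<^sup>2 * dq \<theta> \<sigma>2 u y \<partial>lborel)"
        unfolding E2_def using D(2) by simp
      also have "\<bar>\<dots>\<bar> \<le> M2 * t"
        by (rule set_bound[OF t(1) D(1)]) (use t in \<open>auto intro!: dqb2\<close>)
      finally show ?thesis .
    qed
    define V where "V t = var_real (gauss \<theta> ((1 + t) * \<sigma>2)) f" for t
    have var: "var_ext (gauss \<theta> ((1 + t) * \<sigma>2)) f < \<infinity> \<and> V t = E2 t - (E1 t)\<^sup>2 \<and> 0 \<le> V t"
      if t: "0 \<le> t" "t \<le> \<beta>" for t
    proof -
      have vt: "0 < (1 + t) * \<sigma>2" using s t by simp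
      have i1: "integrable lborel (\<lambda>y. pdf \<theta> ((1 + t) * \<sigma>2) y * f y)" by (rule dom_int[OF s t fm iF1])
      have i2: "integrable lborel (\<lambda>y. pdf \<theta> ((1 + t) * \<sigma>2) y * (f y)\<^sup>2)" by (rule dom_int[OF s t f2m iQ1])
      note GV = gauss_var[OF fm vt i1 i2]
      show ?thesis using GV unfolding V_def E1_def E2_def by simp
    qed
    define C where "C = M2 + M1 * (2 * \<bar>E1 0\<bar> + M1 * \<beta>)"
    have C0: "0 \<le> C" unfolding C_def using M10 M20 b by simp
    have V0: "0 \<le> V 0" using var[of 0] b by simp
    have Vb: "V t \<le> V 0 + C * \<alpha>" if t: "0 \<le> t" "t \<le> \<alpha>" and a: "\<alpha> < \<beta>" for t \<alpha>
    proof -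
      have tb: "t \<le> \<beta>" using t a by simp
      have d1: "\<bar>E1 t - E1 0\<bar> \<le> M1 * t" by (rule dE1[OF t(1) tb])
      have d2: "E2 t - E2 0 \<le> M2 * t" using dE2[OF t(1) tb] by simp
      have s1: "\<bar>E1 t + E1 0\<bar> \<le> 2 * \<bar>E1 0\<bar> + M1 * \<beta>"
      proof -
        have "\<bar>E1 t + E1 0\<bar> \<le> \<bar>E1 t - E1 0\<bar> + 2 * \<bar>E1 0\<bar>" by simp
        also have "\<dots> \<le> M1 * \<beta> + 2 * \<bar>E1 0\<bar>"
          using d1 mult_left_mono[OF tb M10] by simp
        finally show ?thesis by simp
      qed
      have "- ((E1 t - E1 0) * (E1 t + E1 0)) \<le> \<bar>E1 t - E1 0\<bar> * \<bar>E1 t + E1 0\<bar>"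
        by (simp add: abs_mult[symmetric])
      also have "\<dots> \<le> (M1 * t) * (2 * \<bar>E1 0\<bar> + M1 * \<beta>)"
        by (rule mult_mono[OF d1 s1]) (use M10 t in simp_all)
      finally have d3: "- ((E1 t - E1 0) * (E1 t + E1 0)) \<le> (M1 * t) * (2 * \<bar>E1 0\<bar> + M1 * \<beta>)" .
      have "V t - V 0 = (E2 t - E2 0) - (E1 t - E1 0) * (E1 t + E1 0)"
        using var[OF t(1) tb] var[of 0] b by (simp add: power2_eq_square algebra_simps)
      also have "\<dots> \<le> M2 * t + (M1 * t) * (2 * \<bar>E1 0\<bar> + M1 * \<beta>)" using d2 d3 by simp
      also have "\<dots> = C * t" unfolding C_def by (simp add: algebra_simps)
      also have "\<dots> \<le> C * \<alpha>" by (rule mult_left_mono[OF t(2) C0])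
      finally show ?thesis by simp
    qed
    have Hb: "\<bar>H t\<bar> \<le> c0 * (sqrt (V 0) + sqrt C * sqrt \<alpha>)" if t: "0 \<le> t" "t \<le> \<alpha>" and a: "\<alpha> < \<beta>" for t \<alpha>
    proof -
      have tb: "t \<le> \<beta>" using t a by simp
      have "\<bar>H t\<bar> \<le> c0 * sqrt (V t)"
        unfolding H_def c0_def n_def V_def by (rule hbound[OF fm s t(1)]) (use var[OF t(1) tb] in simp)
      also have "\<dots> \<le> c0 * sqrt (V 0 + C * \<alpha>)"
        by (intro mult_left_mono[OF _ c0'] real_sqrt_le_mono Vb[OF t a])
      also have "\<dots> \<le> c0 * (sqrt (V 0) + sqrt C * sqrt \<alpha>)"
      proof (intro mult_left_mono[OF _ c0'])
        have "0 \<le> \<alpha>" using t by simp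
        then have "sqrt (V 0 + C * \<alpha>) \<le> sqrt (V 0) + sqrt (C * \<alpha>)"
          using V0 C0 by (intro sqrt_add_le_add_sqrt) auto
        then show "sqrt (V 0 + C * \<alpha>) \<le> sqrt (V 0) + sqrt C * sqrt \<alpha>" by (simp add: real_sqrt_mult)
      qed
      finally show ?thesis .
    qed
    show ?thesis
    proof (intro exI conjI allI impI)
      show "0 < c0 * sqrt C + 1" using c0' C0 by (simp add: add_nonneg_pos)
      show "(0::real) < 1" by simp
      fix \<alpha> assume a: "0 \<le> \<alpha> \<and> \<alpha> < \<beta> \<and> \<alpha> \<le> 1"
      have "\<bar>LINT t:{0..\<alpha>}|lborel. H t\<bar> \<le> (c0 * (sqrt (V 0) + sqrt C * sqrt \<alpha>)) * \<alpha>"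
        using P1[of \<alpha>] a by (intro set_bound Hb) auto
      then have "\<bar>risk \<theta> \<sigma>2 g \<alpha> - risk \<theta> \<sigma>2 g 0\<bar> \<le> (c0 * (sqrt (V 0) + sqrt C * sqrt \<alpha>)) * \<alpha>"
        using P1[of \<alpha>] a by simp
      also have "\<dots> = sqrt n * \<alpha> / sqrt 2 * sqrt (V 0) + (c0 * sqrt C) * (\<alpha> * sqrt \<alpha>)"
        unfolding c0_def by (simp add: algebra_simps)
      also have "\<dots> \<le> sqrt n * \<alpha> / sqrt 2 * sqrt (V 0) + (c0 * sqrt C + 1) * \<alpha> powr (3/2)"
      proof -
        have "0 \<le> \<alpha> * sqrt \<alpha>" using a by simp
        then have "(c0 * sqrt C) * (\<alpha> * sqrt \<alpha>) \<le> (c0 * sqrt C + 1) * (\<alpha> * sqrt \<alpha>)"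
          by (intro mult_right_mono) auto
        then show ?thesis using a by (simp add: powr_three_halves)
      qed
      finally show "\<bar>risk \<theta> \<sigma>2 g \<alpha> - risk \<theta> \<sigma>2 g 0\<bar>
           \<le> sqrt (real CARD('n)) * \<alpha> / sqrt 2 * sqrt (var_real (gauss \<theta> \<sigma>2) f) + (c0 * sqrt C + 1) * \<alpha> powr (3/2)"
        unfolding V_def n_def by simp
    qed
  qed
  show ?thesis
    unfolding fe using P1 P2 P3 unfolding H_def by blast
qed

end
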